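(* Let $n\ge2$. For every $n$-qubit genuinely entangled state $\rho$, $L(\rho)-l(\rho)\le\max\{0,n-2\}$. Moreover, every state $\rho=\sum_{i=0}^n\lambda_i|D_n^i\rangle\langle D_n^i|$ with $\lambda_i\ge0$, $\sum_i\lambda_i=1$, $\lambda_0\lambda_n\neq0$ and $$\sum_{i,j=0}^n(n-i)j\,\lambda_i\lambda_j\big[(n-i-1)(j-1)-i(n-j)\big]<0$$ is genuinely entangled and satisfies $L(\rho)=n$, $l(\rho)=2$, so $L(\rho)-l(\rho)=n-2$.
   Context: Let $[n]=\{1,\dots,n\}$, $\mathcal H_{[n]}=(\mathbb C^2)^{\otimes n}$; for $S\subseteq[n]$, $\rho_S$ is the partial trace over qubits outside $S$. A pure state is biseparable if it is a product $|\alpha\rangle_S\otimes|\beta\rangle_{\bar S}$ for some $\emptyset\ne S\subsetneq[n]$; a mixed state is biseparable if it is a convex combination of biseparable pure states; genuinely entangled = not biseparable. $\mathcal C(\rho,\mathcal S)=\{\sigma\text{ density matrix}:\sigma_S=\rho_S\ \forall S\in\mathcal S\}$; $\mathcal S$ determines $\rho$ if $\mathcal C(\rho,\mathcal S)=\{\rho\}$, detects $\rho$'s GME if every element of $\mathcal C(\rho,\mathcal S)$ is genuinely entangled. $L(\rho)=\min_{\mathcal S\text{ determines }\rho}\max_{S\in\mathcal S}|S|$, $l(\rho)=\min_{\mathcal S\text{ detects }\rho\text{'s GME}}\max_{S\in\mathcal S}|S|$. Dicke states: $|D_n^i\rangle=\binom{n}{i}^{-1/2}\sum_{s\in\{0,1\}^n,\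 \sum_js_j=i}|s_1\rangle\otimes\cdots\otimes|s_n\rangle$. *)

theory Defs
  imports Complex_Main
begin

text \<open>A computational basis vector |s_1...s_n> of the qubits
in a set T is encoded by the set a \<subseteq> T of qubits in state |1>. Operators on the
qubits T are functions M :: nat set \<Rightarrow> nat set \<Rightarrow> complex, vanishing outside Pow T \<times> Pow T.\<close>

definition qubits :: "nat \<Rightarrow> nat set" where
  "qubits n = {1..n}"

definition density :: "nat set \<Rightarrow> (nat set \<Rightarrow> nat set \<Rightarrow> complex) \<Rightarrow> bool" where
  "density T M \<longleftrightarrow>
     (\<forall>a b. (a \<notin> Pow T \<or> b \<notin> Pow T) \<longrightarrow> M a b = 0) \<and>
     (\<forall>a b. M b a = cnj (M a b)) \<and>
     (\<forall>v :: nat set \<Rightarrow> complex.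
        0 \<le> Re (\<Sum>a\<in>Pow T. \<Sum>b\<in>Pow T. cnj (v a) * M a b * v b)) \<and>
     (\<Sum>a\<in>Pow T. M a a) = 1"

definition ptrace :: "nat \<Rightarrow> nat set \<Rightarrow> (nat set \<Rightarrow> nat set \<Rightarrow> complex) \<Rightarrow> nat set \<Rightarrow> nat set \<Rightarrow> complex" where
  "ptrace n S M a b =
     (if a \<subseteq> S \<and> b \<subseteq> S then (\<Sum>c\<in>Pow (qubits n - S). M (a \<union> c) (b \<union> c)) else 0)"

definition proj :: "(nat set \<Rightarrow> complex) \<Rightarrow> nat set \<Rightarrow> nat set \<Rightarrow> complex" where
  "proj \<psi> a b = \<psi> a * cnj (\<psi> b)"

definition unit_vec :: "nat set \<Rightarrow> (nat set \<Rightarrow> complex) \<Rightarrow> bool" where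
  "unit_vec T \<psi> \<longleftrightarrow> (\<forall>a. a \<notin> Pow T \<longrightarrow> \<psi> a = 0) \<and> (\<Sum>a\<in>Pow T. (cmod (\<psi> a))\<^sup>2) = 1"

definition bisep_pure :: "nat \<Rightarrow> (nat set \<Rightarrow> complex) \<Rightarrow> bool" where
  "bisep_pure n \<psi> \<longleftrightarrow> unit_vec (qubits n) \<psi> \<and>
     (\<exists>S \<alpha> \<beta>. S \<noteq> {} \<and> S \<subset> qubits n \<and>
        (\<forall>a. a \<subseteq> qubits n \<longrightarrow> \<psi> a = \<alpha> (a \<inter> S) * \<beta> (a - S)))"

definition biseparable :: "nat \<Rightarrow> (nat set \<Rightarrow> nat set \<Rightarrow> complex) \<Rightarrow> bool" where
  "biseparable n M \<longleftrightarrow>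
     (\<exists>(m::nat) (p :: nat \<Rightarrow> real) \<psi>.
        (\<forall>i<m. 0 \<le> p i \<and> bisep_pure n (\<psi> i)) \<and> (\<Sum>i<m. p i) = 1 \<and>
        M = (\<lambda>a b. \<Sum>i<m. complex_of_real (p i) * proj (\<psi> i) a b))"

definition genuinely_entangled :: "nat \<Rightarrow> (nat set \<Rightarrow> nat set \<Rightarrow> complex) \<Rightarrow> bool" where
  "genuinely_entangled n M \<longleftrightarrow> \<not> biseparable n M"

definition compat :: "nat \<Rightarrow> (nat set \<Rightarrow> nat set \<Rightarrow> complex) \<Rightarrow> nat set set
                       \<Rightarrow> (nat set \<Rightarrow> nat set \<Rightarrow> complex) set" where
  "compat n \<rho> \<S> = {\<sigma>. density (qubits n) \<sigma> \<and> (\<forall>S\<in>\<S>. ptrace n S \<sigma> = ptrace n S \<rho>)}"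

definition determines :: "nat \<Rightarrow> nat set set \<Rightarrow> (nat set \<Rightarrow> nat set \<Rightarrow> complex) \<Rightarrow> bool" where
  "determines n \<S> \<rho> \<longleftrightarrow> compat n \<rho> \<S> = {\<rho>}"

definition detects_GME :: "nat \<Rightarrow> nat set set \<Rightarrow> (nat set \<Rightarrow> nat set \<Rightarrow> complex) \<Rightarrow> bool" where
  "detects_GME n \<S> \<rho> \<longleftrightarrow> (\<forall>\<sigma>\<in>compat n \<rho> \<S>. genuinely_entangled n \<sigma>)"

text \<open>min over collections \<S> of subsets of [n] of max_{S\<in>\<S>} |S|, written with LEAST
(the max over an empty collection is read as 0).\<close>
definition L_num :: "nat \<Rightarrow> (nat set \<Rightarrow> nat set \<Rightarrow> complex) \<Rightarrow> nat" where
  "L_num n \<rho> = (LEAST k. \<exists>\<S>. \<S> \<subseteq> Pow (qubits n) \<and> determines n \<S> \<rho> \<and> (\<forall>S\<in>\<S>. card S \<le> k))"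

definition l_num :: "nat \<Rightarrow> (nat set \<Rightarrow> nat set \<Rightarrow> complex) \<Rightarrow> nat" where
  "l_num n \<rho> = (LEAST k. \<exists>\<S>. \<S> \<subseteq> Pow (qubits n) \<and> detects_GME n \<S> \<rho> \<and> (\<forall>S\<in>\<S>. card S \<le> k))"

definition dicke :: "nat \<Rightarrow> nat \<Rightarrow> nat set \<Rightarrow> complex" where
  "dicke n i a = (if a \<subseteq> qubits n \<and> card a = i then complex_of_real (1 / sqrt (real (n choose i))) else 0)"

definition dicke_mix :: "nat \<Rightarrow> (nat \<Rightarrow> real) \<Rightarrow> nat set \<Rightarrow> nat set \<Rightarrow> complex" where
  "dicke_mix n lam a b = (\<Sum>i=0..n. complex_of_real (lam i) * proj (dicke n i) a b)"

end

theory Submission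
  imports Defs
begin


lemma sum_pow_prod:
  fixes g :: "nat \<Rightarrow> bool \<Rightarrow> 'c::comm_semiring_1"
  assumes "finite A"
  shows "(\<Sum>R\<in>Pow A. \<Prod>q\<in>A. g q (q \<in> R)) = (\<Prod>q\<in>A. g q True + g q False)"
proof -
  have "(\<Prod>q\<in>A. g q True + g q False) = (\<Sum>R\<in>Pow A. (\<Prod>q\<in>R. g q True) * (\<Prod>q\<in>A-R. g q False))"
    by (rule prod_add[OF assms])
  also have "\<dots> = (\<Sum>R\<in>Pow A. \<Prod>q\<in>A. g q (q \<in> R))"
  proof (rule sum.cong[OF refl])
    fix R assume R: "R \<in> Pow A"
    have fin: "finite R" "finite (A - R)" using R assms finite_subset by auto
    have "(\<Prod>q\<in>A. g q (q \<in> R)) = (\<Prod>q\<in>R \<union> (A-R). g q (q \<in> R))" using R by (intro prod.cong) auto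
    also have "\<dots> = (\<Prod>q\<in>R. g q (q \<in> R)) * (\<Prod>q\<in>A-R. g q (q \<in> R))"
      by (rule prod.union_disjoint) (use fin in auto)
    also have "\<dots> = (\<Prod>q\<in>R. g q True) * (\<Prod>q\<in>A-R. g q False)"
      by (intro arg_cong2[where f="(*)"] prod.cong) auto
    finally show "(\<Prod>q\<in>R. g q True) * (\<Prod>q\<in>A-R. g q False) = (\<Prod>q\<in>A. g q (q \<in> R))" by simp
  qed
  finally show ?thesis by simp
qed

lemma finite_qubits[simp]: "finite (qubits n)" by (simp add: qubits_def)
lemma card_qubits[simp]: "card (qubits n) = n" by (simp add: qubits_def)

lemma sum_card_pow:
  assumes "finite T"
  shows "(\<Sum>c\<in>Pow T. f (card c)) = (\<Sum>s\<le>card T. of_nat (card T choose s) * f s)"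
proof -
  have "(\<Sum>c\<in>Pow T. f (card c)) = (\<Sum>s\<in>{..card T}. \<Sum>c\<in>{c. c \<in> Pow T \<and> card c = s}. f (card c))"
    by (rule sum.group[symmetric]) (use assms card_mono in auto)
  also have "\<dots> = (\<Sum>s\<le>card T. of_nat (card T choose s) * f s)"
  proof (rule sum.cong[OF refl])
    fix s
    have "{c. c \<in> Pow T \<and> card c = s} = {c. c \<subseteq> T \<and> card c = s}" by auto
    then have "card {c. c \<in> Pow T \<and> card c = s} = card T choose s" using n_subsets[OF assms] by simp
    then show "(\<Sum>c\<in>{c. c \<in> Pow T \<and> card c = s}. f (card c)) = of_nat (card T choose s) * f s"
      by simp
  qed
  finally show ?thesis .
qed

lemma mult_cnj_sq: "z * cnj z = complex_of_real ((cmod z)\<^sup>2)"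
  by (simp add: complex_mult_cnj cmod_power2)
lemma cnj_mult_sq: "cnj z * z = complex_of_real ((cmod z)\<^sup>2)"
  by (simp add: complex_mult_cnj cmod_power2 mult.commute)

lemma quad_conv:
  fixes w :: "'i \<Rightarrow> real"
  assumes "finite X" "finite P"
  shows "(\<Sum>a\<in>P. \<Sum>b\<in>P. cnj (v a) * (\<Sum>x\<in>X. complex_of_real (w x) * proj (\<psi> x) a b) * v b)
       = (\<Sum>x\<in>X. complex_of_real (w x * (cmod (\<Sum>a\<in>P. cnj (v a) * \<psi> x a))\<^sup>2))"
proof -
  have "(\<Sum>a\<in>P. \<Sum>b\<in>P. cnj (v a) * (\<Sum>x\<in>X. complex_of_real (w x) * proj (\<psi> x) a b) * v b)
      = (\<Sum>x\<in>X. complex_of_real (w x) * ((\<Sum>a\<in>P. cnj (v a) * \<psi> x a) * (\<Sum>b\<in>P. cnj (\<psi> x b) * v b)))"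
    by (simp add: proj_def sum_distrib_left sum_distrib_right sum.swap[of _ X] mult_ac)
  also have "\<dots> = (\<Sum>x\<in>X. complex_of_real (w x * (cmod (\<Sum>a\<in>P. cnj (v a) * \<psi> x a))\<^sup>2))"
  proof (rule sum.cong[OF refl])
    fix x
    have e: "(\<Sum>b\<in>P. cnj (\<psi> x b) * v b) = cnj (\<Sum>a\<in>P. cnj (v a) * \<psi> x a)" by (simp add: mult.commute)
    show "complex_of_real (w x) * ((\<Sum>a\<in>P. cnj (v a) * \<psi> x a) * (\<Sum>b\<in>P. cnj (\<psi> x b) * v b)) =
         complex_of_real (w x * (cmod (\<Sum>a\<in>P. cnj (v a) * \<psi> x a))\<^sup>2)"
      unfolding e mult_cnj_sq of_real_mult by simp
  qed
  finally show ?thesis .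
qed

lemma convex_density:
  fixes w :: "'i \<Rightarrow> real"
  assumes "finite X" "\<And>x. x \<in> X \<Longrightarrow> 0 \<le> w x" "(\<Sum>x\<in>X. w x) = 1"
    "\<And>x. x \<in> X \<Longrightarrow> unit_vec T (\<psi> x)" "finite T"
  shows "density T (\<lambda>a b. \<Sum>x\<in>X. complex_of_real (w x) * proj (\<psi> x) a b)"
  unfolding density_def
proof (intro conjI allI impI)
  fix a b assume "a \<notin> Pow T \<or> b \<notin> Pow T"
  then have "\<psi> x a = 0 \<or> \<psi> x b = 0" if "x \<in> X" for x
    using assms(4)[OF that] unfolding unit_vec_def by auto
  then show "(\<Sum>x\<in>X. complex_of_real (w x) * proj (\<psi> x) a b) = 0"
    by (auto simp: proj_def intro!: sum.neutral)
next
  fix a b show "(\<Sum>x\<in>X. complex_of_real (w x) * proj (\<psi> x) b a) = cnj (\<Sum>x\<in>X. complex_of_real (w x) * proj (\<psi> x) a b)"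
    by (simp add: proj_def mult_ac)
next
  fix v :: "nat set \<Rightarrow> complex"
  show "0 \<le> Re (\<Sum>a\<in>Pow T. \<Sum>b\<in>Pow T. cnj (v a) * (\<Sum>x\<in>X. complex_of_real (w x) * proj (\<psi> x) a b) * v b)"
    unfolding quad_conv[OF assms(1) finite_Pow_iff[THEN iffD2, OF assms(5)]]
    using assms(2) by (auto intro!: sum_nonneg)
next
  have "(\<Sum>a\<in>Pow T. \<Sum>x\<in>X. complex_of_real (w x) * proj (\<psi> x) a a)
      = (\<Sum>x\<in>X. complex_of_real (w x) * (\<Sum>a\<in>Pow T. complex_of_real ((cmod (\<psi> x a))\<^sup>2)))"
    by (simp add: sum.swap[of _ X] sum_distrib_left proj_def mult_cnj_sq)
  also have "\<dots> = (\<Sum>x\<in>X. complex_of_real (w x))"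
  proof (intro sum.cong refl)
    fix x assume "x \<in> X"
    have "(\<Sum>a\<in>Pow T. complex_of_real ((cmod (\<psi> x a))\<^sup>2)) = complex_of_real (\<Sum>a\<in>Pow T. (cmod (\<psi> x a))\<^sup>2)"
      by (simp only: of_real_sum)
    also have "\<dots> = 1" using assms(4)[OF \<open>x \<in> X\<close>] by (simp add: unit_vec_def)
    finally show "complex_of_real (w x) * (\<Sum>a\<in>Pow T. complex_of_real ((cmod (\<psi> x a))\<^sup>2)) = complex_of_real (w x)" by simp
  qed
  also have "\<dots> = 1" using assms(3) by (simp flip: of_real_sum)
  finally show "(\<Sum>a\<in>Pow T. \<Sum>x\<in>X. complex_of_real (w x) * proj (\<psi> x) a a) = 1" .
qed

lemma convex_bisep:
  fixes w :: "'i \<Rightarrow> real"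
  assumes "finite X" "\<And>x. x \<in> X \<Longrightarrow> 0 \<le> w x" "(\<Sum>x\<in>X. w x) = 1"
    "\<And>x. x \<in> X \<Longrightarrow> bisep_pure n (\<psi> x)"
  shows "biseparable n (\<lambda>a b. \<Sum>x\<in>X. complex_of_real (w x) * proj (\<psi> x) a b)"
proof -
  obtain h where h: "bij_betw h {0..<card X} X" using ex_bij_betw_nat_finite[OF assms(1)] by blast
  have hx: "i < card X \<Longrightarrow> h i \<in> X" for i using h by (auto simp: bij_betw_def)
  show ?thesis unfolding biseparable_def
  proof (intro exI[of _ "card X"] exI[of _ "w \<circ> h"] exI[of _ "\<psi> \<circ> h"] conjI allI impI)
    show "(\<Sum>i<card X. (w \<circ> h) i) = 1"
      using sum.reindex_bij_betw[OF h, of w] assms(3) by (simp add: atLeast0LessThan)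
    show "(\<lambda>a b. \<Sum>x\<in>X. complex_of_real (w x) * proj (\<psi> x) a b) =
      (\<lambda>a b. \<Sum>i<card X. complex_of_real ((w \<circ> h) i) * proj ((\<psi> \<circ> h) i) a b)"
      using sum.reindex_bij_betw[OF h, of "\<lambda>x. complex_of_real (w x) * proj (\<psi> x) _ _"]
      by (simp add: atLeast0LessThan)
  qed (use hx assms in auto)
qed


lemma ptrace_full:
  assumes "density (qubits n) \<sigma>"
  shows "ptrace n (qubits n) \<sigma> = \<sigma>"
proof (intro ext)
  fix a b
  show "ptrace n (qubits n) \<sigma> a b = \<sigma> a b"
  proof (cases "a \<subseteq> qubits n \<and> b \<subseteq> qubits n")
    case True
    then show ?thesis unfolding ptrace_def by simp
  next
    case False
    then have "\<sigma> a b = 0" using assms unfolding density_def by blast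
    then show ?thesis using False unfolding ptrace_def by simp
  qed
qed

lemma determines_full:
  assumes "density (qubits n) \<rho>"
  shows "determines n {qubits n} \<rho>"
proof -
  have "\<sigma> = \<rho>" if "\<sigma> \<in> compat n \<rho> {qubits n}" for \<sigma>
    using that ptrace_full[OF assms] ptrace_full[of n \<sigma>] unfolding compat_def by auto
  moreover have "\<rho> \<in> compat n \<rho> {qubits n}" using assms unfolding compat_def by auto
  ultimately show ?thesis unfolding determines_def by blast
qed

lemma sum_Pow_insert:
  assumes "finite T" "q \<notin> T"
  shows "(\<Sum>a\<in>Pow (insert q T). f a) = (\<Sum>c\<in>Pow T. f c + f (insert q c))"
proof -
  have inj: "inj_on (insert q) (Pow T)" 
    by (rule inj_onI) (metis Pow_iff assms(2) insert_ident subsetD)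
  have "(\<Sum>a\<in>Pow (insert q T). f a) = (\<Sum>a\<in>Pow T \<union> insert q ` Pow T. f a)" by (simp add: Pow_insert)
  also have "\<dots> = (\<Sum>a\<in>Pow T. f a) + (\<Sum>a\<in>insert q ` Pow T. f a)"
    by (rule sum.union_disjoint) (use assms in auto)
  also have "(\<Sum>a\<in>insert q ` Pow T. f a) = (\<Sum>c\<in>Pow T. f (insert q c))"
    by (rule sum.reindex[OF inj, unfolded comp_def])
  finally show ?thesis by (simp add: sum.distrib)
qed

lemma psd2:
  fixes A B Z :: complex
  assumes "Im A = 0" "Im B = 0"
    and psd: "\<And>v0 v1. 0 \<le> Re (cnj v0 * A * v0 + cnj v0 * Z * v1 + cnj v1 * cnj Z * v0 + cnj v1 * B * v1)"
  shows "0 \<le> Re A" "0 \<le> Re B" "(cmod Z)\<^sup>2 \<le> Re A * Re B"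
proof -
  define a where "a = Re A"
  define b where "b = Re B"
  have A: "A = complex_of_real a" and B: "B = complex_of_real b"
    using assms(1,2) by (auto simp: a_def b_def complex_eq_iff)
  have key: "0 \<le> a * (cmod v0)\<^sup>2 + 2 * Re (cnj v0 * Z * v1) + b * (cmod v1)\<^sup>2" for v0 v1
  proof -
    have "Re (cnj v1 * cnj Z * v0) = Re (cnj v0 * Z * v1)"
    proof -
      have "cnj v1 * cnj Z * v0 = cnj (cnj v0 * Z * v1)" by simp
      then show ?thesis by (simp add: algebra_simps)
    qed
    moreover have "Re (cnj v0 * A * v0) = a * (cmod v0)\<^sup>2"
      unfolding cmod_power2 by (simp add: A algebra_simps power2_eq_square)
    moreover have "Re (cnj v1 * B * v1) = b * (cmod v1)\<^sup>2"
      unfolding cmod_power2 by (simp add: B algebra_simps power2_eq_square)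
    moreover have "Re (cnj v0 * A * v0 + cnj v0 * Z * v1 + cnj v1 * cnj Z * v0 + cnj v1 * B * v1)
      = Re (cnj v0 * A * v0) + Re (cnj v0 * Z * v1) + Re (cnj v1 * cnj Z * v0) + Re (cnj v1 * B * v1)"
      by (simp only: plus_complex.sel)
    ultimately show ?thesis using psd[of v0 v1] by linarith
  qed
  show a0: "0 \<le> Re A" using key[of 1 0] by (simp add: a_def)
  show b0: "0 \<le> Re B" using key[of 0 1] by (simp add: b_def)
  show "(cmod Z)\<^sup>2 \<le> Re A * Re B"
  proof (cases "a = 0")
    case False
    then have ap: "a > 0" using a0 a_def by simp
    have e: "Re (cnj (- Z) * Z * complex_of_real a) = - a * (cmod Z)\<^sup>2"
      unfolding cmod_power2 by (simp add: algebra_simps power2_eq_square)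
    have "0 \<le> a * (cmod Z)\<^sup>2 - 2 * a * (cmod Z)\<^sup>2 + b * a\<^sup>2"
      using key[of "- Z" "complex_of_real a"] e ap by simp
    then have "0 \<le> a * (a * b - (cmod Z)\<^sup>2)" by (simp add: algebra_simps power2_eq_square)
    then have "0 \<le> a * b - (cmod Z)\<^sup>2" using ap by (simp add: zero_le_mult_iff)
    then show ?thesis by (simp add: a_def b_def)
  next
    case True
    have "Z = 0"
    proof (rule ccontr)
      assume "Z \<noteq> 0"
      then have zp: "(cmod Z)\<^sup>2 > 0" by simp
      define t where "t = (b + 1) / (2 * (cmod Z)\<^sup>2)"
      have e: "Re (cnj (- complex_of_real t * Z) * Z * 1) = - t * (cmod Z)\<^sup>2"
        unfolding cmod_power2 by (simp add: algebra_simps power2_eq_square)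
      have "0 \<le> - 2 * t * (cmod Z)\<^sup>2 + b"
        using key[of "- complex_of_real t * Z" 1] e True by simp
      moreover have "2 * t * (cmod Z)\<^sup>2 = b + 1" using zp by (simp add: t_def)
      ultimately show False by simp
    qed
    then show ?thesis using a0 b0 by simp
  qed
qed


lemma unit_mix:
  fixes x y :: real
  assumes "x\<^sup>2 + y\<^sup>2 \<le> 1"
  shows "\<exists>m u. 0 \<le> m \<and> m \<le> 1 \<and> cmod (u True) = 1 \<and> cmod (u False) = 1 \<and>
     complex_of_real m * u True + complex_of_real (1 - m) * u False = Complex x y"
proof -
  define s where "s = sqrt (1 - x\<^sup>2)"
  have y0: "0 \<le> y\<^sup>2" by simp
  have x1: "x\<^sup>2 \<le> 1" using assms y0 by linarith
  have s0: "s \<ge> 0" unfolding s_def by (rule real_sqrt_ge_zero) (use x1 in linarith)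
  have ss: "s\<^sup>2 = 1 - x\<^sup>2" unfolding s_def by (rule real_sqrt_pow2) (use x1 in linarith)
  have "y\<^sup>2 \<le> s\<^sup>2" using assms ss by linarith
  then have "\<bar>y\<bar> \<le> \<bar>s\<bar>" by (rule abs_le_square_iff[THEN iffD2])
  then have ys: "\<bar>y\<bar> \<le> s" using s0 by linarith
  define m where "m = (if s = 0 then 1/2 else (1 + y / s) / 2)"
  define u where "u = (\<lambda>r. if r then Complex x s else Complex x (- s))"
  have m01: "0 \<le> m \<and> m \<le> 1 \<and> s * (2 * m - 1) = y"
  proof (cases "s = 0")
    case False
    then have sp: "s > 0" using s0 by linarith
    have "- s \<le> y" "y \<le> s" using ys by linarith+
    then have "- 1 \<le> y / s" "y / s \<le> 1" using sp by (simp_all add: field_simps)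
    moreover have me: "m = (1 + y / s) / 2" using False by (simp add: m_def)
    moreover have "s * (2 * m - 1) = y" unfolding me using sp by (simp add: field_simps)
    ultimately show ?thesis by simp
  next
    case True
    then have "y = 0" using ys by linarith
    then show ?thesis using True by (simp add: m_def)
  qed
  have n1: "cmod (u r) = 1" for r
  proof -
    have "(cmod (u r))\<^sup>2 = 1" using ss by (simp add: u_def cmod_power2)
    then show ?thesis using norm_ge_zero[of "u r"] by (auto simp add: power2_eq_1_iff)
  qed
  have "complex_of_real m * u True + complex_of_real (1 - m) * u False = Complex x (s * (2 * m - 1))"
    by (simp add: u_def complex_eq_iff algebra_simps)
  then show ?thesis using m01 n1 by auto
qed

lemma decomp2:
  fixes a b :: real and Z :: complex
  assumes "0 \<le> a" "0 \<le> b" "a + b = 1" "(cmod Z)\<^sup>2 \<le> a * b"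
  shows "\<exists>(\<mu>::bool \<Rightarrow> real) (\<phi>::bool \<Rightarrow> bool \<Rightarrow> complex).
     (\<forall>r. 0 \<le> \<mu> r) \<and> \<mu> True + \<mu> False = 1 \<and>
     (\<forall>r. (cmod (\<phi> r False))\<^sup>2 + (cmod (\<phi> r True))\<^sup>2 = 1) \<and>
     (\<Sum>r\<in>{True,False}. complex_of_real (\<mu> r) * \<phi> r False * cnj (\<phi> r False)) = complex_of_real a \<and>
     (\<Sum>r\<in>{True,False}. complex_of_real (\<mu> r) * \<phi> r True * cnj (\<phi> r True)) = complex_of_real b \<and>
     (\<Sum>r\<in>{True,False}. complex_of_real (\<mu> r) * \<phi> r False * cnj (\<phi> r True)) = Z \<and>
     (\<Sum>r\<in>{True,False}. complex_of_real (\<mu> r) * \<phi> r True * cnj (\<phi> r False)) = cnj Z"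
proof -
  define r where "r = sqrt (a * b)"
  have r0: "r \<ge> 0" by (simp add: r_def assms)
  have rr: "r\<^sup>2 = a * b" using assms by (simp add: r_def)
  define w where "w = cnj Z / complex_of_real r"
  have wb: "(Re w)\<^sup>2 + (Im w)\<^sup>2 \<le> 1"
  proof (cases "r = 0")
    case True then show ?thesis by (simp add: w_def)
  next
    case False
    then have rp: "r > 0" using r0 by simp
    have "cmod Z \<le> r" using assms(4) rr r0 by (metis abs_le_square_iff abs_of_nonneg norm_ge_zero)
    then have "cmod w \<le> 1" using rp by (simp add: w_def norm_divide divide_le_eq)
    then have "(cmod w)\<^sup>2 \<le> 1" by (simp add: power_le_one)
    then show ?thesis by (simp add: cmod_power2)
  qed
  obtain m u where mu: "0 \<le> m" "m \<le> 1" "cmod (u True) = 1" "cmod (u False) = 1"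
    "complex_of_real m * u True + complex_of_real (1 - m) * u False = Complex (Re w) (Im w)"
    using unit_mix[OF wb] by blast
  have Zr: "Z = complex_of_real r * cnj w"
  proof (cases "r = 0")
    case True
    then have "a * b = 0" using rr by simp
    then have "(cmod Z)\<^sup>2 \<le> 0" using assms(4) by linarith
    then have "(cmod Z)\<^sup>2 = 0" using zero_le_power2[of "cmod Z"] by linarith
    then have "cmod Z = 0" by simp
    then show ?thesis using True by simp
  next
    case False then show ?thesis by (simp add: w_def)
  qed
  define \<mu> where "\<mu> = (\<lambda>x. if x then m else 1 - m)"
  define \<phi> where "\<phi> = (\<lambda>x s. if s then complex_of_real (sqrt b) * u x else complex_of_real (sqrt a))"
  have sa: "complex_of_real (sqrt a) * complex_of_real (sqrt a) = complex_of_real a"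
    using assms(1) by (simp flip: of_real_mult)
  have sb: "complex_of_real (sqrt b) * complex_of_real (sqrt b) = complex_of_real b"
    using assms(2) by (simp flip: of_real_mult)
  have uu: "u x * cnj (u x) = 1" for x
    using mu(3,4) by (cases x) (simp_all add: mult_cnj_sq)
  show ?thesis
  proof (intro exI[of _ \<mu>] exI[of _ \<phi>] conjI allI)
    show "0 \<le> \<mu> x" for x using mu by (simp add: \<mu>_def)
    show "\<mu> True + \<mu> False = 1" by (simp add: \<mu>_def)
    show "(cmod (\<phi> x False))\<^sup>2 + (cmod (\<phi> x True))\<^sup>2 = 1" for x
      using mu(3,4) assms by (cases x) (simp_all add: \<phi>_def norm_mult)
    show "(\<Sum>x\<in>{True,False}. complex_of_real (\<mu> x) * \<phi> x False * cnj (\<phi> x False)) = complex_of_real a"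
      using sa by (simp add: \<mu>_def \<phi>_def flip: distrib_right of_real_add)
    have "(\<Sum>x\<in>{True,False}. complex_of_real (\<mu> x) * \<phi> x True * cnj (\<phi> x True))
        = (complex_of_real m * (u True * cnj (u True)) + complex_of_real (1 - m) * (u False * cnj (u False))) * (complex_of_real (sqrt b) * complex_of_real (sqrt b))"
      by (simp add: \<mu>_def \<phi>_def algebra_simps)
    then show "(\<Sum>x\<in>{True,False}. complex_of_real (\<mu> x) * \<phi> x True * cnj (\<phi> x True)) = complex_of_real b"
      unfolding uu sb by (simp flip: of_real_add)
    have "(\<Sum>x\<in>{True,False}. complex_of_real (\<mu> x) * \<phi> x False * cnj (\<phi> x True))
        = complex_of_real (sqrt a * sqrt b) * cnj (complex_of_real m * u True + complex_of_real (1 - m) * u False)"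
      by (simp add: \<mu>_def \<phi>_def algebra_simps)
    also have "\<dots> = Z" unfolding mu(5) Zr r_def by (simp add: real_sqrt_mult)
    finally show "(\<Sum>x\<in>{True,False}. complex_of_real (\<mu> x) * \<phi> x False * cnj (\<phi> x True)) = Z" .
    moreover have "(\<Sum>x\<in>{True,False}. complex_of_real (\<mu> x) * \<phi> x True * cnj (\<phi> x False))
      = cnj (\<Sum>x\<in>{True,False}. complex_of_real (\<mu> x) * \<phi> x False * cnj (\<phi> x True))"
      unfolding cnj_sum by (intro sum.cong refl) (simp add: mult.commute mult.left_commute)
    ultimately show "(\<Sum>x\<in>{True,False}. complex_of_real (\<mu> x) * \<phi> x True * cnj (\<phi> x False)) = cnj Z"
      by (simp only:)
  qed
qed


lemma quad2:
  fixes M :: "nat set \<Rightarrow> nat set \<Rightarrow> complex"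
  assumes "finite P" "c \<in> P" "d \<in> P" "c \<noteq> d"
  shows "(\<Sum>a\<in>P. \<Sum>b\<in>P. cnj ((\<lambda>a. if a = c then v0 else if a = d then v1 else 0) a) * M a b *
            (\<lambda>a. if a = c then v0 else if a = d then v1 else 0) b)
     = cnj v0 * M c c * v0 + cnj v0 * M c d * v1 + cnj v1 * M d c * v0 + cnj v1 * M d d * v1"
proof -
  let ?V = "\<lambda>a. if a = c then v0 else if a = d then v1 else 0"
  have r: "(\<Sum>a\<in>P. f a) = (\<Sum>a\<in>{c,d}. f a)" if "\<And>a. a \<notin> {c,d} \<Longrightarrow> f a = 0" for f :: "nat set \<Rightarrow> complex"
    by (rule sum.mono_neutral_right) (use assms that in auto)
  have "(\<Sum>a\<in>P. \<Sum>b\<in>P. cnj (?V a) * M a b * ?V b) = (\<Sum>a\<in>{c,d}. \<Sum>b\<in>P. cnj (?V a) * M a b * ?V b)"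
    by (rule r) simp
  also have "\<dots> = (\<Sum>a\<in>{c,d}. \<Sum>b\<in>{c,d}. cnj (?V a) * M a b * ?V b)"
    by (intro sum.cong refl r) simp
  also have "\<dots> = cnj v0 * M c c * v0 + cnj v0 * M c d * v1 + cnj v1 * M d c * v0 + cnj v1 * M d d * v1"
    using assms(4) by (simp add: algebra_simps)
  finally show ?thesis .
qed

definition marg1 :: "nat \<Rightarrow> (nat set \<Rightarrow> nat set \<Rightarrow> complex) \<Rightarrow> nat \<Rightarrow> bool \<Rightarrow> bool \<Rightarrow> complex" where
  "marg1 n \<rho> q s t = ptrace n {q} \<rho> (if s then {q} else {}) (if t then {q} else {})"

lemma qubits_split:
  assumes "q \<in> qubits n"
  shows "qubits n = insert q (qubits n - {q})" "q \<notin> qubits n - {q}" "finite (qubits n - {q})"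
  using assms by auto

lemma marg1_eq:
  assumes "q \<in> qubits n"
  shows "marg1 n \<rho> q s t = (\<Sum>c\<in>Pow (qubits n - {q}).
           \<rho> (if s then insert q c else c) (if t then insert q c else c))"
  unfolding marg1_def ptrace_def by (cases s; cases t; simp)

lemma marg1_facts:
  assumes dens: "density (qubits n) \<rho>" and q: "q \<in> qubits n"
  shows "Im (marg1 n \<rho> q False False) = 0" "Im (marg1 n \<rho> q True True) = 0"
    "marg1 n \<rho> q True False = cnj (marg1 n \<rho> q False True)"
    "Re (marg1 n \<rho> q False False) + Re (marg1 n \<rho> q True True) = 1"
    "0 \<le> Re (marg1 n \<rho> q False False)" "0 \<le> Re (marg1 n \<rho> q True True)"
    "(cmod (marg1 n \<rho> q False True))\<^sup>2 \<le> Re (marg1 n \<rho> q False False) * Re (marg1 n \<rho> q True True)"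
proof -
  let ?T = "qubits n - {q}"
  have herm: "\<rho> b a = cnj (\<rho> a b)" for a b using dens unfolding density_def by blast
  have hm: "marg1 n \<rho> q t s = cnj (marg1 n \<rho> q s t)" for s t
    unfolding marg1_eq[OF q] cnj_sum by (intro sum.cong refl herm)
  show i1: "Im (marg1 n \<rho> q False False) = 0" 
  proof -
    have "Im (marg1 n \<rho> q False False) = - Im (marg1 n \<rho> q False False)"
      using arg_cong[OF hm[of False False], of Im] by simp
    then show ?thesis by simp
  qed
  show i2: "Im (marg1 n \<rho> q True True) = 0" 
  proof -
    have "Im (marg1 n \<rho> q True True) = - Im (marg1 n \<rho> q True True)"
      using arg_cong[OF hm[of True True], of Im] by simp
    then show ?thesis by simp
  qed
  show h: "marg1 n \<rho> q True False = cnj (marg1 n \<rho> q False True)" by (rule hm)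
  have tr: "(\<Sum>a\<in>Pow (qubits n). \<rho> a a) = 1" using dens unfolding density_def by blast
  have "marg1 n \<rho> q False False + marg1 n \<rho> q True True = (\<Sum>c\<in>Pow ?T. \<rho> c c + \<rho> (insert q c) (insert q c))"
    unfolding marg1_eq[OF q] by (simp add: sum.distrib)
  also have "\<dots> = (\<Sum>a\<in>Pow (insert q ?T). \<rho> a a)"
    by (rule sum_Pow_insert[symmetric]) auto
  also have "\<dots> = 1" using tr qubits_split(1)[OF q] by simp
  finally have tr1: "marg1 n \<rho> q False False + marg1 n \<rho> q True True = 1" .
  show "Re (marg1 n \<rho> q False False) + Re (marg1 n \<rho> q True True) = 1"
    using arg_cong[of _ _ Re, OF tr1] by simp
  have psd: "0 \<le> Re (cnj v0 * marg1 n \<rho> q False False * v0 + cnj v0 * marg1 n \<rho> q False True * v1 +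
                cnj v1 * cnj (marg1 n \<rho> q False True) * v0 + cnj v1 * marg1 n \<rho> q True True * v1)" for v0 v1
  proof -
    let ?V = "\<lambda>c a. if a = c then v0 else if a = insert q c then v1 else 0"
    have eachc: "(\<Sum>a\<in>Pow (qubits n). \<Sum>b\<in>Pow (qubits n). cnj (?V c a) * \<rho> a b * ?V c b)
        = cnj v0 * \<rho> c c * v0 + cnj v0 * \<rho> c (insert q c) * v1 + cnj v1 * \<rho> (insert q c) c * v0
          + cnj v1 * \<rho> (insert q c) (insert q c) * v1" if "c \<in> Pow ?T" for c
      by (rule quad2) (use that q in auto)
    have "cnj v0 * marg1 n \<rho> q False False * v0 + cnj v0 * marg1 n \<rho> q False True * v1 +
                cnj v1 * cnj (marg1 n \<rho> q False True) * v0 + cnj v1 * marg1 n \<rho> q True True * v1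
        = cnj v0 * marg1 n \<rho> q False False * v0 + cnj v0 * marg1 n \<rho> q False True * v1 +
                cnj v1 * marg1 n \<rho> q True False * v0 + cnj v1 * marg1 n \<rho> q True True * v1"
      using h by simp
    also have "\<dots> = (\<Sum>c\<in>Pow ?T. cnj v0 * \<rho> c c * v0 + cnj v0 * \<rho> c (insert q c) * v1 + cnj v1 * \<rho> (insert q c) c * v0
          + cnj v1 * \<rho> (insert q c) (insert q c) * v1)"
      unfolding marg1_eq[OF q] by (simp add: sum.distrib sum_distrib_left sum_distrib_right)
    also have "\<dots> = (\<Sum>c\<in>Pow ?T. (\<Sum>a\<in>Pow (qubits n). \<Sum>b\<in>Pow (qubits n). cnj (?V c a) * \<rho> a b * ?V c b))"
      by (intro sum.cong refl eachc[symmetric]) 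
    finally have e: "cnj v0 * marg1 n \<rho> q False False * v0 + cnj v0 * marg1 n \<rho> q False True * v1 +
                cnj v1 * cnj (marg1 n \<rho> q False True) * v0 + cnj v1 * marg1 n \<rho> q True True * v1
       = (\<Sum>c\<in>Pow ?T. (\<Sum>a\<in>Pow (qubits n). \<Sum>b\<in>Pow (qubits n). cnj (?V c a) * \<rho> a b * ?V c b))" .
    have psdr: "\<And>v. 0 \<le> Re (\<Sum>a\<in>Pow (qubits n). \<Sum>b\<in>Pow (qubits n). cnj (v a) * \<rho> a b * v b)"
      using dens unfolding density_def by blast
    have nn: "0 \<le> Re (\<Sum>a\<in>Pow (qubits n). \<Sum>b\<in>Pow (qubits n). cnj (?V c a) * \<rho> a b * ?V c b)" for c
      by (rule psdr)
    show ?thesis unfolding e by (subst Re_sum) (intro sum_nonneg nn)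
  qed
  note p = psd2[OF i1 i2 psd]
  show "0 \<le> Re (marg1 n \<rho> q False False)" "0 \<le> Re (marg1 n \<rho> q True True)"
    "(cmod (marg1 n \<rho> q False True))\<^sup>2 \<le> Re (marg1 n \<rho> q False False) * Re (marg1 n \<rho> q True True)"
    using p by auto
qed


lemma prod_state:
  fixes \<mu> :: "nat \<Rightarrow> bool \<Rightarrow> real" and \<phi> :: "nat \<Rightarrow> bool \<Rightarrow> bool \<Rightarrow> complex"
  assumes mu0: "\<And>q r. q \<in> qubits n \<Longrightarrow> 0 \<le> \<mu> q r"
    and mu1: "\<And>q. q \<in> qubits n \<Longrightarrow> \<mu> q True + \<mu> q False = 1"
    and phi1: "\<And>q r. q \<in> qubits n \<Longrightarrow> (cmod (\<phi> q r False))\<^sup>2 + (cmod (\<phi> q r True))\<^sup>2 = 1"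
    and n2: "n \<ge> 2"
  defines "\<psi> \<equiv> \<lambda>R a. if a \<subseteq> qubits n then \<Prod>q\<in>qubits n. \<phi> q (q \<in> R) (q \<in> a) else 0"
  defines "w \<equiv> \<lambda>R. \<Prod>q\<in>qubits n. \<mu> q (q \<in> R)"
  defines "\<sigma> \<equiv> \<lambda>a b. \<Sum>R\<in>Pow (qubits n). complex_of_real (w R) * proj (\<psi> R) a b"
  shows "density (qubits n) \<sigma>" "biseparable n \<sigma>"
    "\<And>a b. \<sigma> a b = (if a \<subseteq> qubits n \<and> b \<subseteq> qubits n then
        \<Prod>q\<in>qubits n. (\<Sum>r\<in>{True,False}. complex_of_real (\<mu> q r) * \<phi> q r (q \<in> a) * cnj (\<phi> q r (q \<in> b))) else 0)"
proof -
  have w0: "0 \<le> w R" if "R \<in> Pow (qubits n)" for R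
    unfolding w_def by (intro prod_nonneg) (use mu0 in auto)
  have w1: "(\<Sum>R\<in>Pow (qubits n). w R) = 1"
  proof -
    have "(\<Sum>R\<in>Pow (qubits n). w R) = (\<Prod>q\<in>qubits n. \<mu> q True + \<mu> q False)"
      unfolding w_def by (rule sum_pow_prod) simp
    also have "\<dots> = 1" using mu1 by (intro prod.neutral) auto
    finally show ?thesis .
  qed
  have unit: "unit_vec (qubits n) (\<psi> R)" for R
    unfolding unit_vec_def
  proof (intro conjI allI impI)
    fix a assume "a \<notin> Pow (qubits n)" then show "\<psi> R a = 0" by (simp add: \<psi>_def)
  next
    have "(\<Sum>a\<in>Pow (qubits n). (cmod (\<psi> R a))\<^sup>2) = (\<Sum>a\<in>Pow (qubits n). \<Prod>q\<in>qubits n. (cmod (\<phi> q (q \<in> R) (q \<in> a)))\<^sup>2)"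
      by (intro sum.cong refl) (simp add: \<psi>_def prod_norm[symmetric] prod_power_distrib)
    also have "\<dots> = (\<Prod>q\<in>qubits n. (cmod (\<phi> q (q \<in> R) True))\<^sup>2 + (cmod (\<phi> q (q \<in> R) False))\<^sup>2)"
      by (rule sum_pow_prod) simp
    also have "\<dots> = 1" using phi1 by (intro prod.neutral) (auto simp: add.commute)
    finally show "(\<Sum>a\<in>Pow (qubits n). (cmod (\<psi> R a))\<^sup>2) = 1" .
  qed
  show "density (qubits n) \<sigma>" unfolding \<sigma>_def
    by (rule convex_density) (use w0 w1 unit in auto)
  have bp: "bisep_pure n (\<psi> R)" for R
  proof -
    define \<alpha> where "\<alpha> = (\<lambda>x. \<Prod>q\<in>{1}. \<phi> q (q \<in> R) (q \<in> x))"
    define \<beta> where "\<beta> = (\<lambda>y. \<Prod>q\<in>qubits n - {1}. \<phi> q (q \<in> R) (q \<in> y))"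
    have 2: "2 \<in> qubits n" and 1: "1 \<in> qubits n" using n2 by (auto simp: qubits_def)
    moreover have "(2::nat) \<notin> {1}" by simp
    ultimately have "{1} \<subseteq> qubits n" "{1} \<noteq> qubits n" by blast+
    then have sub: "{1} \<subset> qubits n" by (rule psubsetI)
    have split: "\<psi> R a = \<alpha> (a \<inter> {1}) * \<beta> (a - {1})" if a: "a \<subseteq> qubits n" for a
    proof -
      have e0: "\<psi> R a = (\<Prod>q\<in>qubits n. \<phi> q (q \<in> R) (q \<in> a))" using a by (simp add: \<psi>_def)
      have e1: "(\<Prod>q\<in>qubits n. \<phi> q (q \<in> R) (q \<in> a)) = (\<Prod>q\<in>qubits n - {1}. \<phi> q (q \<in> R) (q \<in> a)) * (\<Prod>q\<in>{1}. \<phi> q (q \<in> R) (q \<in> a))"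
        by (rule prod.subset_diff) (use 1 in auto)
      have e2: "(\<Prod>q\<in>qubits n - {1}. \<phi> q (q \<in> R) (q \<in> a)) = \<beta> (a - {1})"
        unfolding \<beta>_def by (intro prod.cong refl) auto
      have e3: "(\<Prod>q\<in>{1}. \<phi> q (q \<in> R) (q \<in> a)) = \<alpha> (a \<inter> {1})"
        unfolding \<alpha>_def by simp
      show ?thesis unfolding e0 e1 e2 e3 by (rule mult.commute)
    qed
    show ?thesis unfolding bisep_pure_def
      using unit[of R] sub split by blast
  qed
  show "biseparable n \<sigma>" unfolding \<sigma>_def
    by (rule convex_bisep) (use w0 w1 bp in auto)
  fix a b
  show "\<sigma> a b = (if a \<subseteq> qubits n \<and> b \<subseteq> qubits n then
        \<Prod>q\<in>qubits n. (\<Sum>r\<in>{True,False}. complex_of_real (\<mu> q r) * \<phi> q r (q \<in> a) * cnj (\<phi> q r (q \<in> b))) else 0)"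
  proof (cases "a \<subseteq> qubits n \<and> b \<subseteq> qubits n")
    case True
    have "\<sigma> a b = (\<Sum>R\<in>Pow (qubits n). \<Prod>q\<in>qubits n. complex_of_real (\<mu> q (q \<in> R)) * \<phi> q (q \<in> R) (q \<in> a) * cnj (\<phi> q (q \<in> R) (q \<in> b)))"
      unfolding \<sigma>_def using True by (intro sum.cong refl) (simp add: w_def \<psi>_def proj_def prod.distrib)
    also have "\<dots> = (\<Prod>q\<in>qubits n. (\<Sum>r\<in>{True,False}. complex_of_real (\<mu> q r) * \<phi> q r (q \<in> a) * cnj (\<phi> q r (q \<in> b))))"
      by (subst sum_pow_prod) simp_all
    finally show ?thesis using True by simp
  next
    case False
    then have "\<not> a \<subseteq> qubits n \<or> \<not> b \<subseteq> qubits n" by simp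
    then show ?thesis by (elim disjE) (simp_all add: \<sigma>_def \<psi>_def proj_def)
  qed
qed

lemma ptrace_prodform:
  fixes M :: "nat \<Rightarrow> bool \<Rightarrow> bool \<Rightarrow> complex"
  assumes S: "S \<subseteq> qubits n" and tr: "\<And>q. q \<in> qubits n - S \<Longrightarrow> M q True True + M q False False = 1"
    and sig: "\<And>a b. \<sigma> a b = (if a \<subseteq> qubits n \<and> b \<subseteq> qubits n then \<Prod>q\<in>qubits n. M q (q \<in> a) (q \<in> b) else 0)"
    and xy: "x \<subseteq> S" "y \<subseteq> S"
  shows "ptrace n S \<sigma> x y = (\<Prod>q\<in>S. M q (q \<in> x) (q \<in> y))"
proof -
  have "ptrace n S \<sigma> x y = (\<Sum>c\<in>Pow (qubits n - S). \<sigma> (x \<union> c) (y \<union> c))"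
    using xy by (simp add: ptrace_def)
  also have "\<dots> = (\<Sum>c\<in>Pow (qubits n - S). (\<Prod>q\<in>S. M q (q \<in> x) (q \<in> y)) * (\<Prod>q\<in>qubits n - S. M q (q \<in> c) (q \<in> c)))"
  proof (intro sum.cong refl)
    fix c assume c: "c \<in> Pow (qubits n - S)"
    have sub: "x \<union> c \<subseteq> qubits n" "y \<union> c \<subseteq> qubits n" using c xy S by auto
    have "(\<Prod>q\<in>qubits n. M q (q \<in> x \<union> c) (q \<in> y \<union> c))
        = (\<Prod>q\<in>qubits n - S. M q (q \<in> x \<union> c) (q \<in> y \<union> c)) * (\<Prod>q\<in>S. M q (q \<in> x \<union> c) (q \<in> y \<union> c))"
      by (rule prod.subset_diff[OF S]) simp
    also have "(\<Prod>q\<in>qubits n - S. M q (q \<in> x \<union> c) (q \<in> y \<union> c)) = (\<Prod>q\<in>qubits n - S. M q (q \<in> c) (q \<in> c))"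
    proof (intro prod.cong refl)
      fix q assume "q \<in> qubits n - S"
      then have "q \<notin> x" "q \<notin> y" using xy by auto
      then show "M q (q \<in> x \<union> c) (q \<in> y \<union> c) = M q (q \<in> c) (q \<in> c)" by simp
    qed
    also have "(\<Prod>q\<in>S. M q (q \<in> x \<union> c) (q \<in> y \<union> c)) = (\<Prod>q\<in>S. M q (q \<in> x) (q \<in> y))"
    proof (intro prod.cong refl)
      fix q assume "q \<in> S"
      then have "q \<notin> c" using c by auto
      then show "M q (q \<in> x \<union> c) (q \<in> y \<union> c) = M q (q \<in> x) (q \<in> y)" by simp
    qed
    finally show "\<sigma> (x \<union> c) (y \<union> c) = (\<Prod>q\<in>S. M q (q \<in> x) (q \<in> y)) * (\<Prod>q\<in>qubits n - S. M q (q \<in> c) (q \<in> c))"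
      using sub by (simp add: sig mult.commute)
  qed
  also have "\<dots> = (\<Prod>q\<in>S. M q (q \<in> x) (q \<in> y)) * (\<Prod>q\<in>qubits n - S. M q True True + M q False False)"
    by (simp add: sum_distrib_left[symmetric] sum_pow_prod[of "qubits n - S" "\<lambda>q t. M q t t"])
  also have "(\<Prod>q\<in>qubits n - S. M q True True + M q False False) = 1"
    using tr by (intro prod.neutral) auto
  finally show ?thesis by simp
qed


lemma low_marginals_bisep:
  assumes dens: "density (qubits n) \<rho>" and n2: "n \<ge> 2"
    and SS: "\<S> \<subseteq> Pow (qubits n)" "\<forall>S\<in>\<S>. card S \<le> 1"
  shows "\<exists>\<sigma>\<in>compat n \<rho> \<S>. biseparable n \<sigma>"
proof -
  let ?m = "marg1 n \<rho>"
  have ex: "\<forall>q\<in>qubits n. \<exists>(\<mu>::bool \<Rightarrow> real). \<exists>(\<phi>::bool \<Rightarrow> bool \<Rightarrow> complex).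
     (\<forall>r. 0 \<le> \<mu> r) \<and> \<mu> True + \<mu> False = 1 \<and>
     (\<forall>r. (cmod (\<phi> r False))\<^sup>2 + (cmod (\<phi> r True))\<^sup>2 = 1) \<and>
     (\<Sum>r\<in>{True,False}. complex_of_real (\<mu> r) * \<phi> r False * cnj (\<phi> r False)) = complex_of_real (Re (?m q False False)) \<and>
     (\<Sum>r\<in>{True,False}. complex_of_real (\<mu> r) * \<phi> r True * cnj (\<phi> r True)) = complex_of_real (Re (?m q True True)) \<and>
     (\<Sum>r\<in>{True,False}. complex_of_real (\<mu> r) * \<phi> r False * cnj (\<phi> r True)) = ?m q False True \<and>
     (\<Sum>r\<in>{True,False}. complex_of_real (\<mu> r) * \<phi> r True * cnj (\<phi> r False)) = cnj (?m q False True)"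
    by (intro ballI decomp2) (use marg1_facts[OF dens] in auto)
  then obtain \<mu> where "\<forall>q\<in>qubits n. \<exists>(\<phi>::bool \<Rightarrow> bool \<Rightarrow> complex).
     (\<forall>r. 0 \<le> \<mu> q r) \<and> \<mu> q True + \<mu> q False = 1 \<and>
     (\<forall>r. (cmod (\<phi> r False))\<^sup>2 + (cmod (\<phi> r True))\<^sup>2 = 1) \<and>
     (\<Sum>r\<in>{True,False}. complex_of_real (\<mu> q r) * \<phi> r False * cnj (\<phi> r False)) = complex_of_real (Re (?m q False False)) \<and>
     (\<Sum>r\<in>{True,False}. complex_of_real (\<mu> q r) * \<phi> r True * cnj (\<phi> r True)) = complex_of_real (Re (?m q True True)) \<and>
     (\<Sum>r\<in>{True,False}. complex_of_real (\<mu> q r) * \<phi> r False * cnj (\<phi> r True)) = ?m q False True \<and>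
     (\<Sum>r\<in>{True,False}. complex_of_real (\<mu> q r) * \<phi> r True * cnj (\<phi> r False)) = cnj (?m q False True)"
    by (rule bchoice[THEN exE]) blast
  then obtain \<phi> where P: "\<forall>q\<in>qubits n.
     (\<forall>r. 0 \<le> \<mu> q r) \<and> \<mu> q True + \<mu> q False = 1 \<and>
     (\<forall>r. (cmod (\<phi> q r False))\<^sup>2 + (cmod (\<phi> q r True))\<^sup>2 = 1) \<and>
     (\<Sum>r\<in>{True,False}. complex_of_real (\<mu> q r) * \<phi> q r False * cnj (\<phi> q r False)) = complex_of_real (Re (?m q False False)) \<and>
     (\<Sum>r\<in>{True,False}. complex_of_real (\<mu> q r) * \<phi> q r True * cnj (\<phi> q r True)) = complex_of_real (Re (?m q True True)) \<and>
     (\<Sum>r\<in>{True,False}. complex_of_real (\<mu> q r) * \<phi> q r False * cnj (\<phi> q r True)) = ?m q False True \<and>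
     (\<Sum>r\<in>{True,False}. complex_of_real (\<mu> q r) * \<phi> q r True * cnj (\<phi> q r False)) = cnj (?m q False True)"
    by (rule bchoice[THEN exE]) blast
  have mre: "complex_of_real (Re (?m q s s)) = ?m q s s" if "q \<in> qubits n" for q s
    using marg1_facts(1,2)[OF dens that] by (cases s) (simp_all add: complex_eq_iff)
  have entries: "(\<Sum>r\<in>{True,False}. complex_of_real (\<mu> q r) * \<phi> q r s * cnj (\<phi> q r t)) = ?m q s t"
    if q: "q \<in> qubits n" for q s t
    using P q mre[OF q] marg1_facts(3)[OF dens q] by (cases s; cases t) auto
  define \<psi> where "\<psi> \<equiv> \<lambda>R a. if a \<subseteq> qubits n then \<Prod>q\<in>qubits n. \<phi> q (q \<in> R) (q \<in> a) else (0::complex)"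
  define w where "w \<equiv> \<lambda>R. \<Prod>q\<in>qubits n. \<mu> q (q \<in> R)"
  define \<sigma> where "\<sigma> \<equiv> \<lambda>a b. \<Sum>R\<in>Pow (qubits n). complex_of_real (w R) * proj (\<psi> R) a b"
  note ps = prod_state[of n \<mu> \<phi>]
  have ps_h: "\<And>q r. q \<in> qubits n \<Longrightarrow> 0 \<le> \<mu> q r" "\<And>q. q \<in> qubits n \<Longrightarrow> \<mu> q True + \<mu> q False = 1"
    "\<And>q r. q \<in> qubits n \<Longrightarrow> (cmod (\<phi> q r False))\<^sup>2 + (cmod (\<phi> q r True))\<^sup>2 = 1"
    using P by auto
  note ps' = ps[OF ps_h n2]
  have sig: "\<sigma> a b = (if a \<subseteq> qubits n \<and> b \<subseteq> qubits n then \<Prod>q\<in>qubits n. ?m q (q \<in> a) (q \<in> b) else 0)" for a b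
  proof (cases "a \<subseteq> qubits n \<and> b \<subseteq> qubits n")
    case True
    have "\<sigma> a b = (\<Prod>q\<in>qubits n. (\<Sum>r\<in>{True,False}. complex_of_real (\<mu> q r) * \<phi> q r (q \<in> a) * cnj (\<phi> q r (q \<in> b))))"
      unfolding \<sigma>_def \<psi>_def w_def using ps'(3)[of a b] True by simp
    also have "\<dots> = (\<Prod>q\<in>qubits n. ?m q (q \<in> a) (q \<in> b))"
      by (intro prod.cong refl entries)
    finally show ?thesis using True by simp
  next
    case False
    show ?thesis unfolding if_not_P[OF False] \<sigma>_def \<psi>_def w_def
      using ps'(3)[of a b] unfolding if_not_P[OF False] .
  qed
  have tr: "?m q True True + ?m q False False = 1" if q: "q \<in> qubits n" for q
  proof -
    have "complex_of_real (Re (?m q False False) + Re (?m q True True)) = 1" using marg1_facts(4)[OF dens q] by simp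
    then show ?thesis using mre[OF q, of True] mre[OF q, of False] by (simp add: add.commute)
  qed
  have "\<sigma> \<in> compat n \<rho> \<S>"
    unfolding compat_def
  proof (intro CollectI conjI ballI)
    show "density (qubits n) \<sigma>" unfolding \<sigma>_def \<psi>_def w_def by (rule ps'(1))
  next
    fix S assume S: "S \<in> \<S>"
    have Ssub: "S \<subseteq> qubits n" using S SS by auto
    then have finS: "finite S" by (rule finite_subset) simp
    have "card S \<le> 1" using S SS by auto
    then have Sc: "S = {} \<or> (\<exists>q. S = {q})" using finS
      by (metis card_0_eq card_1_singletonE le_Suc_eq One_nat_def le_zero_eq)
    show "ptrace n S \<sigma> = ptrace n S \<rho>"
    proof (intro ext)
      fix x y
      show "ptrace n S \<sigma> x y = ptrace n S \<rho> x y"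
      proof (cases "x \<subseteq> S \<and> y \<subseteq> S")
        case False show ?thesis unfolding ptrace_def if_not_P[OF False] by (rule refl)
      next
        case True
        have "ptrace n S \<sigma> x y = (\<Prod>q\<in>S. ?m q (q \<in> x) (q \<in> y))"
          by (rule ptrace_prodform[OF Ssub _ sig]) (use tr True in auto)
        also have "\<dots> = ptrace n S \<rho> x y"
          using Sc
        proof
          assume "S = {}"
          then have "x = {}" "y = {}" using True by auto
          moreover have "(\<Sum>a\<in>Pow (qubits n). \<rho> a a) = 1" using dens unfolding density_def by blast
          ultimately show ?thesis using \<open>S = {}\<close> by (simp add: ptrace_def)
        next
          assume "\<exists>q. S = {q}"
          then obtain q where Sq: "S = {q}" by blast
          have xq: "x = (if q \<in> x then {q} else {})" "y = (if q \<in> y then {q} else {})" using True Sq by auto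
          have "(\<Prod>q\<in>S. ?m q (q \<in> x) (q \<in> y)) = ?m q (q \<in> x) (q \<in> y)" using Sq by simp
          also have "\<dots> = ptrace n {q} \<rho> (if q \<in> x then {q} else {}) (if q \<in> y then {q} else {})"
            by (simp add: marg1_def)
          also have "\<dots> = ptrace n S \<rho> x y" using xq Sq by simp
          finally show ?thesis .
        qed
        finally show ?thesis .
      qed
    qed
  qed
  moreover have "biseparable n \<sigma>" unfolding \<sigma>_def \<psi>_def w_def by (rule ps'(2))
  ultimately show ?thesis by blast
qed


lemma card_subset_qubits: "a \<subseteq> qubits n \<Longrightarrow> card a \<le> n"
  using card_mono[of "qubits n" a] by simp

lemma dicke_sq:
  assumes "a \<subseteq> qubits n" "b \<subseteq> qubits n"
  shows "dicke n i a * cnj (dicke n i b) =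
     (if card a = i \<and> card b = i then complex_of_real (1 / real (n choose i)) else 0)"
proof (cases "card a = i \<and> card b = i")
  case True
  then have "i \<le> n" using card_subset_qubits[OF assms(1)] by simp
  then have pos: "real (n choose i) > 0" by simp
  define C where "C = real (n choose i)"
  have Cp: "C > 0" using pos by (simp add: C_def)
  have ss: "sqrt C * sqrt C = C" using Cp by simp
  have r: "1 / sqrt C * (1 / sqrt C) = 1 / C" using ss Cp by (simp add: field_simps)
  have key: "complex_of_real (1 / sqrt C) * cnj (complex_of_real (1 / sqrt C)) = complex_of_real (1 / C)"
    unfolding complex_cnj_complex_of_real of_real_mult[symmetric] r by (rule refl)
  have da: "dicke n i a = complex_of_real (1 / sqrt C)" "dicke n i b = complex_of_real (1 / sqrt C)"
    using True assms by (simp_all add: dicke_def C_def)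
  show ?thesis unfolding da key using True by (simp add: C_def)
next
  case False then show ?thesis by (auto simp: dicke_def)
qed

lemma dicke_mix_entry:
  assumes "a \<subseteq> qubits n" "b \<subseteq> qubits n"
  shows "dicke_mix n lam a b = (if card a = card b then complex_of_real (lam (card a) / real (n choose card a)) else 0)"
proof -
  have "dicke_mix n lam a b = (\<Sum>i=0..n. complex_of_real (lam i) *
         (if card a = i \<and> card b = i then complex_of_real (1 / real (n choose i)) else 0))"
    unfolding dicke_mix_def proj_def using dicke_sq[OF assms] by simp
  also have "\<dots> = (\<Sum>i=0..n. if i = card a then (if card b = card a then complex_of_real (lam (card a) / real (n choose card a)) else 0) else 0)"
    by (intro sum.cong refl) auto
  also have "\<dots> = (if card a = card b then complex_of_real (lam (card a) / real (n choose card a)) else 0)"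
    using card_subset_qubits[OF assms(1)] by (simp add: sum.delta')
  finally show ?thesis .
qed

lemma dicke_mix_outside:
  assumes "\<not> (a \<subseteq> qubits n \<and> b \<subseteq> qubits n)"
  shows "dicke_mix n lam a b = 0"
proof -
  have "dicke n i a = 0 \<or> dicke n i b = 0" for i using assms by (auto simp: dicke_def)
  then show ?thesis unfolding dicke_mix_def proj_def by (intro sum.neutral ballI) auto
qed

lemma dicke_unit:
  assumes "i \<le> n"
  shows "unit_vec (qubits n) (dicke n i)"
  unfolding unit_vec_def
proof (intro conjI allI impI)
  fix a assume "a \<notin> Pow (qubits n)" then show "dicke n i a = 0" by (simp add: dicke_def)
next
  have pos: "real (n choose i) > 0" using assms by simp
  have "(\<Sum>a\<in>Pow (qubits n). (cmod (dicke n i a))\<^sup>2) = (\<Sum>a\<in>Pow (qubits n). if card a = i then 1 / real (n choose i) else 0)"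
  proof (intro sum.cong refl)
    fix a assume "a \<in> Pow (qubits n)"
    then show "(cmod (dicke n i a))\<^sup>2 = (if card a = i then 1 / real (n choose i) else 0)"
      using pos by (simp add: dicke_def norm_divide power_divide)
  qed
  also have "\<dots> = real (card {a \<in> Pow (qubits n). card a = i}) * (1 / real (n choose i))"
    by (simp add: sum.If_cases Int_def)
  also have "card {a \<in> Pow (qubits n). card a = i} = n choose i"
    using n_subsets[of "qubits n" i] by (simp add: Pow_def conj_commute)
  finally show "(\<Sum>a\<in>Pow (qubits n). (cmod (dicke n i a))\<^sup>2) = 1" using pos by simp
qed

lemma dicke_mix_density:
  assumes "\<forall>i\<in>{0..n}. 0 \<le> lam i" "(\<Sum>i=0..n. lam i) = 1"
  shows "density (qubits n) (dicke_mix n lam)"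
  unfolding dicke_mix_def[abs_def]
  by (rule convex_density) (use assms dicke_unit in auto)


lemma quadX:
  fixes P :: "nat set set" and c d :: "nat set"
  assumes "finite P" "c \<in> P" "d \<in> P" "c \<noteq> d"
  shows "(\<Sum>a\<in>P. \<Sum>b\<in>P. cnj (v a) * (if (a = c \<and> b = d) \<or> (a = d \<and> b = c) then 1 else 0) * v b)
       = cnj (v c) * v d + cnj (v d) * v c"
proof -
  have "(\<Sum>a\<in>P. \<Sum>b\<in>P. cnj (v a) * (if (a = c \<and> b = d) \<or> (a = d \<and> b = c) then 1 else 0) * v b)
     = (\<Sum>a\<in>P. (if a = c then cnj (v c) * v d else 0) + (if a = d then cnj (v d) * v c else 0))"
  proof (intro sum.cong refl)
    fix a assume a: "a \<in> P"
    have "(\<Sum>b\<in>P. cnj (v a) * (if (a = c \<and> b = d) \<or> (a = d \<and> b = c) then 1 else 0) * v b)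
        = (\<Sum>b\<in>P. (if b = d then (if a = c then cnj (v a) * v b else 0) else 0) + (if b = c then (if a = d then cnj (v a) * v b else 0) else 0))"
      using assms(4) by (intro sum.cong refl) auto
    also have "\<dots> = (if a = c then cnj (v c) * v d else 0) + (if a = d then cnj (v d) * v c else 0)"
      using assms by (simp add: sum.distrib)
    finally show "(\<Sum>b\<in>P. cnj (v a) * (if (a = c \<and> b = d) \<or> (a = d \<and> b = c) then 1 else 0) * v b)
        = (if a = c then cnj (v c) * v d else 0) + (if a = d then cnj (v d) * v c else 0)" .
  qed
  also have "\<dots> = cnj (v c) * v d + cnj (v d) * v c"
    using assms by (simp add: sum.distrib)
  finally show ?thesis .
qed

lemma inner_dicke0:
  "(\<Sum>a\<in>Pow (qubits n). cnj (v a) * dicke n 0 a) = cnj (v {})"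
proof -
  have "(\<Sum>a\<in>Pow (qubits n). cnj (v a) * dicke n 0 a) = (\<Sum>a\<in>Pow (qubits n). if a = {} then cnj (v {}) else 0)"
  proof (intro sum.cong refl)
    fix a assume "a \<in> Pow (qubits n)"
    then have "finite a" by (intro finite_subset[of a "qubits n"]) auto
    then show "cnj (v a) * dicke n 0 a = (if a = {} then cnj (v {}) else 0)"
      by (auto simp: dicke_def)
  qed
  also have "\<dots> = cnj (v {})" by simp
  finally show ?thesis .
qed

lemma inner_dicken:
  "(\<Sum>a\<in>Pow (qubits n). cnj (v a) * dicke n n a) = cnj (v (qubits n))"
proof -
  have "(\<Sum>a\<in>Pow (qubits n). cnj (v a) * dicke n n a) = (\<Sum>a\<in>Pow (qubits n). if a = qubits n then cnj (v (qubits n)) else 0)"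
  proof (intro sum.cong refl)
    fix a assume a: "a \<in> Pow (qubits n)"
    have "card a = n \<longleftrightarrow> a = qubits n"
      using a card_subset_eq[of "qubits n" a] by auto
    then show "cnj (v a) * dicke n n a = (if a = qubits n then cnj (v (qubits n)) else 0)"
      using a by (auto simp: dicke_def)
  qed
  also have "\<dots> = cnj (v (qubits n))" by simp
  finally show ?thesis .
qed

lemma dicke_quad_lower:
  assumes lam0: "\<forall>i\<in>{0..n}. 0 \<le> lam i" and n1: "n \<ge> 1"
  shows "lam 0 * (cmod (v {}))\<^sup>2 + lam n * (cmod (v (qubits n)))\<^sup>2 \<le>
     Re (\<Sum>a\<in>Pow (qubits n). \<Sum>b\<in>Pow (qubits n). cnj (v a) * dicke_mix n lam a b * v b)"
proof -
  let ?f = "\<lambda>i. lam i * (cmod (\<Sum>a\<in>Pow (qubits n). cnj (v a) * dicke n i a))\<^sup>2"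
  have "(\<Sum>a\<in>Pow (qubits n). \<Sum>b\<in>Pow (qubits n). cnj (v a) * dicke_mix n lam a b * v b)
      = (\<Sum>i\<in>{0..n}. complex_of_real (?f i))"
    unfolding dicke_mix_def by (rule quad_conv) auto
  then have e: "Re (\<Sum>a\<in>Pow (qubits n). \<Sum>b\<in>Pow (qubits n). cnj (v a) * dicke_mix n lam a b * v b) = (\<Sum>i\<in>{0..n}. ?f i)"
    by simp
  have "(\<Sum>i\<in>{0,n}. ?f i) \<le> (\<Sum>i\<in>{0..n}. ?f i)"
    by (rule sum_mono2) (use lam0 in auto)
  moreover have "(\<Sum>i\<in>{0,n}. ?f i) = ?f 0 + ?f n" using n1 by simp
  moreover have "?f 0 = lam 0 * (cmod (v {}))\<^sup>2" by (simp add: inner_dicke0)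
  moreover have "?f n = lam n * (cmod (v (qubits n)))\<^sup>2" by (simp add: inner_dicken)
  ultimately show ?thesis unfolding e by simp
qed

lemma not_determines:
  assumes lam0: "\<forall>i\<in>{0..n}. 0 \<le> lam i" and lam1: "(\<Sum>i=0..n. lam i) = 1"
    and lamne: "lam 0 * lam n \<noteq> 0" and n1: "n \<ge> 1"
    and SS: "\<S> \<subseteq> Pow (qubits n)" "\<forall>S\<in>\<S>. card S \<le> k" and k: "k < n"
  shows "\<not> determines n \<S> (dicke_mix n lam)"
proof
  assume det: "determines n \<S> (dicke_mix n lam)"
  let ?\<rho> = "dicke_mix n lam"
  define X where "X = (\<lambda>a b. if (a = {} \<and> b = qubits n) \<or> (a = qubits n \<and> b = {}) then (1::complex) else 0)"
  define \<epsilon> where "\<epsilon> = min (lam 0) (lam n)"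
  have "lam 0 \<ge> 0" "lam n \<ge> 0" using lam0 by auto
  moreover have "lam 0 \<noteq> 0" "lam n \<noteq> 0" using lamne by auto
  ultimately have l0: "lam 0 > 0" "lam n > 0" by auto
  then have ep: "\<epsilon> > 0" by (simp add: \<epsilon>_def)
  have ne: "{} \<noteq> qubits n" using n1 by (auto simp: qubits_def)
  define \<sigma> where "\<sigma> = (\<lambda>a b. ?\<rho> a b + complex_of_real \<epsilon> * X a b)"
  have dens: "density (qubits n) ?\<rho>" by (rule dicke_mix_density[OF lam0 lam1])
  have "density (qubits n) \<sigma>"
    unfolding density_def
  proof (intro conjI allI impI)
    fix a b assume ab: "a \<notin> Pow (qubits n) \<or> b \<notin> Pow (qubits n)"
    then have "?\<rho> a b = 0" using dens unfolding density_def by blast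
    moreover have "X a b = 0" using ab by (auto simp: X_def)
    ultimately show "\<sigma> a b = 0" by (simp add: \<sigma>_def)
  next
    fix a b
    have "?\<rho> b a = cnj (?\<rho> a b)" using dens unfolding density_def by blast
    moreover have "X b a = cnj (X a b)" by (auto simp: X_def)
    ultimately show "\<sigma> b a = cnj (\<sigma> a b)" by (simp add: \<sigma>_def)
  next
    fix v :: "nat set \<Rightarrow> complex"
    let ?x = "v {}" and ?y = "v (qubits n)"
    have qs: "(\<Sum>a\<in>Pow (qubits n). \<Sum>b\<in>Pow (qubits n). cnj (v a) * \<sigma> a b * v b)
       = (\<Sum>a\<in>Pow (qubits n). \<Sum>b\<in>Pow (qubits n). cnj (v a) * ?\<rho> a b * v b)
         + complex_of_real \<epsilon> * (\<Sum>a\<in>Pow (qubits n). \<Sum>b\<in>Pow (qubits n). cnj (v a) * X a b * v b)"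
      by (simp add: \<sigma>_def algebra_simps sum.distrib sum_distrib_left)
    have qx: "(\<Sum>a\<in>Pow (qubits n). \<Sum>b\<in>Pow (qubits n). cnj (v a) * X a b * v b) = cnj ?x * ?y + cnj ?y * ?x"
      unfolding X_def by (rule quadX) (use ne in auto)
    have rex: "Re (cnj ?x * ?y + cnj ?y * ?x) = 2 * Re (cnj ?x * ?y)"
    proof -
      have "cnj ?y * ?x = cnj (cnj ?x * ?y)" by simp
      then have "Re (cnj ?y * ?x) = Re (cnj ?x * ?y)" by simp
      then show ?thesis by (simp only: plus_complex.sel)
    qed
    define R where "R = Re (cnj ?x * ?y)"
    define p where "p = cmod ?x * cmod ?y"
    define s where "s = (cmod ?x)\<^sup>2 + (cmod ?y)\<^sup>2"
    have h1: "\<bar>R\<bar> \<le> p"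
      using abs_Re_le_cmod[of "cnj ?x * ?y"] by (simp add: norm_mult R_def p_def)
    have h2: "2 * p \<le> s"
      using sum_squares_bound[of "cmod ?x" "cmod ?y"] by (simp add: power2_eq_square p_def s_def)
    have h3: "\<epsilon> * s \<le> lam 0 * (cmod ?x)\<^sup>2 + lam n * (cmod ?y)\<^sup>2"
    proof -
      have "\<epsilon> * (cmod ?x)\<^sup>2 \<le> lam 0 * (cmod ?x)\<^sup>2" by (intro mult_right_mono) (auto simp: \<epsilon>_def)
      moreover have "\<epsilon> * (cmod ?y)\<^sup>2 \<le> lam n * (cmod ?y)\<^sup>2" by (intro mult_right_mono) (auto simp: \<epsilon>_def)
      ultimately show ?thesis by (simp add: distrib_left s_def)
    qed
    note h4 = dicke_quad_lower[OF lam0 n1, of v]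
    have "- (2 * p) \<le> 2 * R" using h1 by linarith
    then have h5: "\<epsilon> * (- (2 * p)) \<le> \<epsilon> * (2 * R)" using ep by (intro mult_left_mono) auto
    have h6: "\<epsilon> * (2 * p) \<le> \<epsilon> * s" using h2 ep by (intro mult_left_mono) auto
    have "0 \<le> Re (\<Sum>a\<in>Pow (qubits n). \<Sum>b\<in>Pow (qubits n). cnj (v a) * ?\<rho> a b * v b) + \<epsilon> * (2 * R)"
      using h3 h4 h5 h6 by (simp only: mult_minus_right)
    then have "0 \<le> Re (\<Sum>a\<in>Pow (qubits n). \<Sum>b\<in>Pow (qubits n). cnj (v a) * ?\<rho> a b * v b) + \<epsilon> * (2 * Re (cnj ?x * ?y))"
      by (simp add: R_def)
    then show "0 \<le> Re (\<Sum>a\<in>Pow (qubits n). \<Sum>b\<in>Pow (qubits n). cnj (v a) * \<sigma> a b * v b)"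
      unfolding qs qx using rex by simp
  next
    have "(\<Sum>a\<in>Pow (qubits n). ?\<rho> a a) = 1" using dens unfolding density_def by blast
    moreover have "X a a = 0" for a using ne by (auto simp: X_def)
    ultimately show "(\<Sum>a\<in>Pow (qubits n). \<sigma> a a) = 1" by (simp add: \<sigma>_def sum.distrib)
  qed
  moreover have "ptrace n S \<sigma> = ptrace n S ?\<rho>" if S: "S \<in> \<S>" for S
  proof (intro ext)
    fix x y
    have Ssub: "S \<subseteq> qubits n" using S SS by auto
    have "card S < n" using S SS k by fastforce
    then have Sne: "S \<noteq> qubits n" by auto
    show "ptrace n S \<sigma> x y = ptrace n S ?\<rho> x y"
    proof (cases "x \<subseteq> S \<and> y \<subseteq> S")
      case False show ?thesis unfolding ptrace_def if_not_P[OF False] by (rule refl)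
    next
      case True
      have "X (x \<union> c) (y \<union> c) = 0" for c
      proof -
        have "\<not> (x \<union> c = {} \<and> y \<union> c = qubits n)" using True Sne Ssub by auto
        moreover have "\<not> (x \<union> c = qubits n \<and> y \<union> c = {})" using True Sne Ssub by auto
        ultimately show ?thesis by (simp add: X_def)
      qed
      then show ?thesis using True by (simp add: ptrace_def \<sigma>_def)
    qed
  qed
  ultimately have "\<sigma> \<in> compat n ?\<rho> \<S>" unfolding compat_def by blast
  then have "\<sigma> = ?\<rho>" using det unfolding determines_def by blast
  moreover have "\<sigma> {} (qubits n) \<noteq> ?\<rho> {} (qubits n)" using ep by (simp add: \<sigma>_def X_def)
  ultimately show False by simp
qed


definition symm :: "nat \<Rightarrow> (nat set \<Rightarrow> complex) \<Rightarrow> bool" where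
  "symm n \<psi> \<longleftrightarrow> (\<forall>a b. a \<subseteq> qubits n \<longrightarrow> b \<subseteq> qubits n \<longrightarrow> card a = card b \<longrightarrow> \<psi> a = \<psi> b)"

lemma sym_from_swaps:
  assumes sw: "\<And>i j c. i \<in> qubits n \<Longrightarrow> j \<in> qubits n \<Longrightarrow> i \<noteq> j \<Longrightarrow> c \<subseteq> qubits n - {i,j} \<Longrightarrow>
      \<psi> (insert i c) = \<psi> (insert j c)"
  shows "symm n \<psi>"
  unfolding symm_def
proof (intro allI impI)
  fix a b assume a: "a \<subseteq> qubits n" and b: "b \<subseteq> qubits n" and cab: "card a = card b"
  have fin: "finite x" if "x \<subseteq> qubits n" for x by (rule finite_subset[OF that]) simp
  show "\<psi> a = \<psi> b" using a cab
  proof (induction "card (a - b)" arbitrary: a rule: less_induct)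
    case less
    show ?case
    proof (cases "a - b = {}")
      case True
      then have "a \<subseteq> b" by auto
      then have "a = b" using card_subset_eq[OF fin[OF b]] less.prems by auto
      then show ?thesis by simp
    next
      case False
      then obtain i where i: "i \<in> a" "i \<notin> b" by auto
      have "card (b - a) = card (a - b)"
        using less.prems fin[OF b] fin[OF less.prems(1)]
        by (metis card_Diff_subset_Int finite_Int inf_commute inf_le1)
      moreover have "card (a - b) > 0" using False fin[OF less.prems(1)] by (simp add: card_gt_0_iff)
      ultimately have "b - a \<noteq> {}" by (metis card.empty less_irrefl)
      then obtain j where j: "j \<in> b" "j \<notin> a" by auto
      define a' where "a' = insert j (a - {i})"
      have ij: "i \<noteq> j" using i j by auto
      have "\<psi> a = \<psi> (insert i (a - {i}))" using i by (simp add: insert_absorb)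
      also have "\<dots> = \<psi> a'" unfolding a'_def
        by (rule sw) (use less.prems i j b ij in auto)
      finally have e1: "\<psi> a = \<psi> a'" .
      have a'sub: "a' \<subseteq> qubits n" using less.prems j b by (auto simp: a'_def)
      have finad: "finite (a - {i})" using fin[OF less.prems(1)] by simp
      have "card a' = Suc (card (a - {i}))" using j finad by (simp add: a'_def)
      also have "\<dots> = card a" by (rule card_Suc_Diff1[OF fin[OF less.prems(1)] i(1)])
      finally have "card a' = card a" .
      then have ca': "card a' = card b" using less.prems by simp
      have "a' - b = (a - b) - {i}" using j by (auto simp: a'_def)
      moreover have "i \<in> a - b" using i by simp
      moreover have "finite (a - b)" using fin[OF less.prems(1)] by simp
      ultimately have "card (a' - b) < card (a - b)" by (metis card_Diff1_less)
      then have "\<psi> a' = \<psi> b" using less.hyps a'sub ca' by blast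
      then show ?thesis using e1 by simp
    qed
  qed
qed

lemma transfer:
  assumes sy: "symm n \<psi>"
    and D: "D \<subseteq> qubits n" "D' \<subseteq> qubits n" "card D = card D'"
    and X: "X \<subseteq> D" "X' \<subseteq> D'" "card X = card X'"
  shows "(\<Sum>c\<in>Pow (qubits n - D). f (\<psi> (X \<union> c))) = (\<Sum>c\<in>Pow (qubits n - D'). f (\<psi> (X' \<union> c)))"
proof -
  have finD: "finite D" "finite D'" using finite_subset[OF D(1)] finite_subset[OF D(2)] by simp_all
  have "card (qubits n - D) = card (qubits n - D')"
    using D finD by (simp add: card_Diff_subset)
  then obtain g where g: "bij_betw g (qubits n - D) (qubits n - D')"
    using finite_same_card_bij[of "qubits n - D" "qubits n - D'"] by auto
  have gP: "bij_betw (image g) (Pow (qubits n - D)) (Pow (qubits n - D'))"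
    by (rule bij_betw_image_Pow[OF g])
  have "(\<Sum>c\<in>Pow (qubits n - D'). f (\<psi> (X' \<union> c))) = (\<Sum>c\<in>Pow (qubits n - D). f (\<psi> (X' \<union> g ` c)))"
    using sum.reindex_bij_betw[OF gP, of "\<lambda>c. f (\<psi> (X' \<union> c))"] by simp
  also have "\<dots> = (\<Sum>c\<in>Pow (qubits n - D). f (\<psi> (X \<union> c)))"
  proof (intro sum.cong refl)
    fix c assume c: "c \<in> Pow (qubits n - D)"
    have finc: "finite c" using c finite_subset[of c "qubits n"] by auto
    have injc: "inj_on g c" using g c by (auto simp: bij_betw_def intro: inj_on_subset)
    have gc: "g ` c \<subseteq> qubits n - D'" using g c by (auto simp: bij_betw_def)
    have finX: "finite X" "finite X'" using X finD finite_subset by auto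
    have "card (X' \<union> g ` c) = card X' + card (g ` c)"
      by (rule card_Un_disjoint) (use finX finc gc X in auto)
    also have "card (g ` c) = card c" by (rule card_image[OF injc])
    also have "card X' + card c = card (X \<union> c)"
      using X c finX finc by (subst card_Un_disjoint) auto
    finally have "card (X' \<union> g ` c) = card (X \<union> c)" .
    moreover have "X' \<union> g ` c \<subseteq> qubits n" "X \<union> c \<subseteq> qubits n" using gc c X D by auto
    ultimately show "f (\<psi> (X' \<union> g ` c)) = f (\<psi> (X \<union> c))" using sy unfolding symm_def by metis
  qed
  finally show ?thesis by simp
qed

lemma amgm_t:
  fixes x y t :: real
  assumes "t > 0"
  shows "x * y \<le> (t * x\<^sup>2 + y\<^sup>2 / t) / 2"
proof -
  have "0 \<le> (t * x - y)\<^sup>2 / t" using assms by simp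
  also have "(t * x - y)\<^sup>2 / t = t * x\<^sup>2 + y\<^sup>2 / t - 2 * x * y"
    using assms by (simp add: power2_eq_square field_simps)
  finally show ?thesis by simp
qed

lemma sum_half:
  fixes f g :: "'a \<Rightarrow> real"
  shows "(\<Sum>c\<in>A. (t * f c + g c / t) / 2) = (t * sum f A + sum g A / t) / 2"
  by (simp add: sum.distrib sum_distrib_left sum_divide_distrib add_divide_distrib)

lemma cut_bound:
  assumes sy: "symm n \<psi>" and S: "S \<subseteq> qubits n"
    and prod: "\<And>a. a \<subseteq> qubits n \<Longrightarrow> \<psi> a = \<alpha> (a \<inter> S) * \<beta> (a - S)"
    and i: "i \<in> S" and j: "j \<in> qubits n - S" and t: "t > 0"
  shows "(\<Sum>c\<in>Pow (qubits n - {i,j}). (cmod (\<psi> ({i} \<union> c)))\<^sup>2)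
     \<le> (t * (\<Sum>c\<in>Pow (qubits n - {i,j}). (cmod (\<psi> ({} \<union> c)))\<^sup>2)
        + (\<Sum>c\<in>Pow (qubits n - {i,j}). (cmod (\<psi> ({i,j} \<union> c)))\<^sup>2) / t) / 2"
proof -
  have each: "(cmod (\<psi> ({i} \<union> c)))\<^sup>2 \<le> (t * (cmod (\<psi> ({} \<union> c)))\<^sup>2 + (cmod (\<psi> ({i,j} \<union> c)))\<^sup>2 / t) / 2"
    if c: "c \<in> Pow (qubits n - {i,j})" for c
  proof -
    have iq: "i \<in> qubits n" using i S by auto
    have ij: "i \<noteq> j" using i j by auto
    have fin: "finite c" using c finite_subset[of c "qubits n"] by auto
    have subs: "{i} \<union> c \<subseteq> qubits n" "{j} \<union> c \<subseteq> qubits n" "c \<subseteq> qubits n" "{i,j} \<union> c \<subseteq> qubits n"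
      using c iq j by auto
    have "i \<notin> c" "j \<notin> c" using c by auto
    then have "card ({i} \<union> c) = card ({j} \<union> c)" using fin by simp
    then have eqij: "\<psi> ({i} \<union> c) = \<psi> ({j} \<union> c)" using sy subs unfolding symm_def by blast
    have "\<psi> ({i} \<union> c) * \<psi> ({j} \<union> c) = \<psi> c * \<psi> ({i,j} \<union> c)"
    proof -
      have s1: "({i} \<union> c) \<inter> S = insert i (c \<inter> S)" "({i} \<union> c) - S = c - S" using i j by auto
      have s2: "({j} \<union> c) \<inter> S = c \<inter> S" "({j} \<union> c) - S = insert j (c - S)" using i j by auto
      have s3: "({i,j} \<union> c) \<inter> S = insert i (c \<inter> S)" "({i,j} \<union> c) - S = insert j (c - S)" using i j by auto
      show ?thesis using prod[OF subs(1)] prod[OF subs(2)] prod[OF subs(3)] prod[OF subs(4)]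
        unfolding s1 s2 s3 by (simp add: ac_simps)
    qed
    then have "cmod (\<psi> ({i} \<union> c)) * cmod (\<psi> ({i} \<union> c)) = cmod (\<psi> c) * cmod (\<psi> ({i,j} \<union> c))"
      using eqij by (metis norm_mult)
    then have "(cmod (\<psi> ({i} \<union> c)))\<^sup>2 = cmod (\<psi> ({} \<union> c)) * cmod (\<psi> ({i,j} \<union> c))"
      by (simp add: power2_eq_square)
    also have "\<dots> \<le> (t * (cmod (\<psi> ({} \<union> c)))\<^sup>2 + (cmod (\<psi> ({i,j} \<union> c)))\<^sup>2 / t) / 2"
      by (rule amgm_t[OF t])
    finally show ?thesis .
  qed
  have "(\<Sum>c\<in>Pow (qubits n - {i,j}). (cmod (\<psi> ({i} \<union> c)))\<^sup>2)
     \<le> (\<Sum>c\<in>Pow (qubits n - {i,j}). (t * (cmod (\<psi> ({} \<union> c)))\<^sup>2 + (cmod (\<psi> ({i,j} \<union> c)))\<^sup>2 / t) / 2)"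
    by (rule sum_mono) (rule each)
  also have "\<dots> = (t * (\<Sum>c\<in>Pow (qubits n - {i,j}). (cmod (\<psi> ({} \<union> c)))\<^sup>2)
        + (\<Sum>c\<in>Pow (qubits n - {i,j}). (cmod (\<psi> ({i,j} \<union> c)))\<^sup>2) / t) / 2"
    by (rule sum_half)
  finally show ?thesis .
qed

lemma quad_contra:
  fixes A B C :: real
  assumes "0 \<le> A" "0 \<le> B" "0 \<le> C" "A * B < C\<^sup>2"
    and bound: "\<And>t. t > 0 \<Longrightarrow> C \<le> (t * A + B / t) / 2"
  shows False
proof -
  have "0 \<le> A * B" using assms(1,2) by simp
  then have "C \<noteq> 0" using assms(4) by auto
  then have Cp: "C > 0" using assms(3) by simp
  show False
  proof (cases "A = 0")
    case True
    define t where "t = (B + 1) / C"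
    have tp: "t > 0" using Cp assms(2) by (simp add: t_def)
    have "C \<le> (B / t) / 2" using bound[OF tp] True by simp
    also have "B / t = B * C / (B + 1)" using Cp assms(2) by (simp add: t_def field_simps)
    finally have "2 * C * (B + 1) \<le> B * C" using assms(2) by (simp add: field_simps)
    moreover have "0 \<le> B * C" using Cp assms(2) by simp
    moreover have "2 * C * (B + 1) = 2 * (B * C) + 2 * C" by (simp add: algebra_simps)
    ultimately show False using Cp by linarith
  next
    case False
    then have Ap: "A > 0" using assms(1) by simp
    define t where "t = C / A"
    have tp: "t > 0" using Cp Ap by (simp add: t_def)
    have "C \<le> (t * A + B / t) / 2" by (rule bound[OF tp])
    also have "t * A = C" using Ap by (simp add: t_def)
    also have "B / t = A * B / C" using Ap Cp by (simp add: t_def field_simps)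
    finally have "2 * C * C \<le> C * C + A * B" using Cp by (simp add: field_simps)
    then show False using assms(4) by (simp add: power2_eq_square)
  qed
qed


lemma b3: "((p+2) choose (s+2)) * ((s+2)*(s+1)) = (p+2)*(p+1)*(p choose s)"
proof -
  have e1: "(p+2) * ((p+1) choose (s+1)) = ((p+2) choose (s+2)) * (s+2)"
    using Suc_times_binomial_eq[of "p+1" "s+1"] by (simp only: Suc_eq_plus1 add.assoc one_add_one)
  have e2: "(p+1) * (p choose s) = ((p+1) choose (s+1)) * (s+1)"
    using Suc_times_binomial_eq[of p s] by (simp only: Suc_eq_plus1)
  have "((p+2) choose (s+2)) * ((s+2)*(s+1)) = (((p+2) choose (s+2)) * (s+2)) * (s+1)" by (simp only: mult.assoc)
  also have "\<dots> = (p+2) * (((p+1) choose (s+1)) * (s+1))" unfolding e1[symmetric] by (simp only: mult.assoc)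
  also have "\<dots> = (p+2)*(p+1)*(p choose s)" unfolding e2[symmetric] by (simp only: mult.assoc)
  finally show ?thesis .
qed

lemma b2: "((p+2) choose (s+1)) * ((s+1)*(p+1-s)) = (p+2)*(p+1)*(p choose s)"
proof -
  have e1: "(p+2) * ((p+1) choose s) = ((p+2) choose (s+1)) * (s+1)"
    using Suc_times_binomial_eq[of "p+1" s] by (simp only: Suc_eq_plus1 add.assoc one_add_one)
  have e2: "(p+1-s) * ((p+1) choose s) = (p+1) * (p choose s)"
    using binomial_absorb_comp[of "p+1" s] by (simp only: add_diff_cancel_right')
  have "((p+2) choose (s+1)) * ((s+1)*(p+1-s)) = (((p+2) choose (s+1)) * (s+1)) * (p+1-s)" by (simp only: mult.assoc)
  also have "\<dots> = (p+2) * ((p+1-s) * ((p+1) choose s))" unfolding e1[symmetric] by (simp only: ac_simps)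
  also have "\<dots> = (p+2)*(p+1)*(p choose s)" unfolding e2 by (simp only: mult.assoc)
  finally show ?thesis .
qed

lemma b1:
  assumes "s \<le> p"
  shows "((p+2) choose s) * ((p+2-s)*(p+1-s)) = (p+2)*(p+1)*(p choose s)"
proof -
  define s' where "s' = p - s"
  have a1: "p+2-s = s'+2" "p+1-s = s'+1" "p - s = s'" using assms by (auto simp: s'_def)
  have "(p+2) choose s = (p+2) choose (p+2-s)"
    by (rule binomial_symmetric) (use assms in simp)
  then have c1: "(p+2) choose s = (p+2) choose (s'+2)" unfolding a1 .
  have "p choose s = p choose (p - s)"
    by (rule binomial_symmetric) (use assms in simp)
  then have c2: "p choose s = p choose s'" unfolding a1 .
  show ?thesis unfolding c1 c2 a1 by (rule b3)
qed

lemma aux_div: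
  fixes K X Y P l :: real
  assumes "K > 0" "K * X = Y * P"
  shows "Y * (P * (l / K)) = X * l"
proof -
  have "Y * (P * (l / K)) = (Y * P) * l / K" by simp
  also have "\<dots> = (K * X) * l / K" using assms(2) by simp
  also have "\<dots> = X * l" using assms(1) by simp
  finally show ?thesis .
qed

lemma A_term:
  fixes lam :: "nat \<Rightarrow> real"
  assumes n: "n = p + 2" and s: "s \<le> p"
  shows "real n * (real n - 1) * (real (p choose s) * (lam s / real (n choose s))) = (real n - real s) * (real n - real s - 1) * lam s"
proof -
  have e: "p + 2 - 1 = p + 1" by simp
  have sn: "s + 1 \<le> n" "1 \<le> n" "s \<le> n" "s \<le> n - 1" using s n by auto
  have nat: "(n choose s) * ((n-s)*(n-1-s)) = n*(n-1)*(p choose s)"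
    using b1[OF s] unfolding n e by (simp only: diff_right_commute)
  have r: "real (n choose s) * (real (n-s) * real (n-1-s)) = real n * real (n-1) * real (p choose s)"
    using arg_cong[OF nat, of real] by (simp only: of_nat_mult)
  have c1: "real (n-s) = real n - real s" "real (n-1-s) = real n - real s - 1" "real (n-1) = real n - 1"
    using sn by (simp_all add: of_nat_diff)
  have "real (n choose s) * ((real n - real s) * (real n - real s - 1)) = real n * (real n - 1) * real (p choose s)"
    using r unfolding c1 .
  moreover have "real (n choose s) > 0" using sn by simp
  ultimately show ?thesis using aux_div by (metis mult.assoc)
qed

lemma C_term:
  fixes lam :: "nat \<Rightarrow> real"
  assumes n: "n = p + 2" and s: "s \<le> p"
  shows "real n * (real n - 1) * (real (p choose s) * (lam (s+1) / real (n choose (s+1)))) = real (s+1) * (real n - real (s+1)) * lam (s+1)"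
proof -
  have e: "p + 2 - 1 = p + 1" by simp
  have sn: "s + 1 \<le> n" "1 \<le> n" "s \<le> n" "s \<le> n - 1" using s n by auto
  have nat: "(n choose (s+1)) * ((s+1)*(n-1-s)) = n*(n-1)*(p choose s)"
    using b2[of p s] unfolding n e by (simp only: diff_right_commute)
  have r: "real (n choose (s+1)) * (real (s+1) * real (n-1-s)) = real n * real (n-1) * real (p choose s)"
    using arg_cong[OF nat, of real] by (simp only: of_nat_mult)
  have c1: "real (n-1-s) = real n - real (s+1)" "real (n-1) = real n - 1"
    using sn by (simp_all add: of_nat_diff)
  have "real (n choose (s+1)) * (real (s+1) * (real n - real (s+1))) = real n * (real n - 1) * real (p choose s)"
    using r unfolding c1 .
  moreover have "real (n choose (s+1)) > 0" using sn by simp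
  ultimately show ?thesis using aux_div by (metis mult.assoc)
qed

lemma B_term:
  fixes lam :: "nat \<Rightarrow> real"
  assumes n: "n = p + 2" and s: "s \<le> p"
  shows "real n * (real n - 1) * (real (p choose s) * (lam (s+2) / real (n choose (s+2)))) = real (s+2) * (real (s+2) - 1) * lam (s+2)"
proof -
  have e: "p + 2 - 1 = p + 1" by simp
  have sn: "s + 1 \<le> n" "1 \<le> n" "s \<le> n" "s \<le> n - 1" using s n by auto
  have nat: "(n choose (s+2)) * ((s+2)*(s+1)) = n*(n-1)*(p choose s)"
    using b3[of p s] unfolding n e .
  have r: "real (n choose (s+2)) * (real (s+2) * real (s+1)) = real n * real (n-1) * real (p choose s)"
    using arg_cong[OF nat, of real] by (simp only: of_nat_mult)
  have c1: "real (s+1) = real (s+2) - 1" "real (n-1) = real n - 1"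
    using sn by (simp_all add: of_nat_diff)
  have "real (n choose (s+2)) * (real (s+2) * (real (s+2) - 1)) = real n * (real n - 1) * real (p choose s)"
    using r unfolding c1 .
  moreover have "s + 2 \<le> n" using s n by simp
  then have "real (n choose (s+2)) > 0" by simp
  ultimately show ?thesis using aux_div by (metis mult.assoc)
qed

lemma A_formula:
  fixes lam :: "nat \<Rightarrow> real"
  assumes n: "n = p + 2"
  shows "real n * (real n - 1) * (\<Sum>s\<le>p. real (p choose s) * (lam s / real (n choose s)))
     = (\<Sum>i=0..n. (real n - real i) * (real n - real i - 1) * lam i)"
proof -
  have "(\<Sum>i=0..n. (real n - real i) * (real n - real i - 1) * lam i) = (\<Sum>i\<le>Suc (Suc p). (real n - real i) * (real n - real i - 1) * lam i)"
    using n by (simp add: atLeast0AtMost)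
  also have "\<dots> = (\<Sum>i\<le>p. (real n - real i) * (real n - real i - 1) * lam i)"
    using n by (simp add: sum.atMost_Suc)
  also have "\<dots> = (\<Sum>s\<le>p. real n * (real n - 1) * (real (p choose s) * (lam s / real (n choose s))))"
    by (intro sum.cong refl A_term[OF n, symmetric]) simp
  finally show ?thesis by (simp add: sum_distrib_left)
qed

lemma C_formula:
  fixes lam :: "nat \<Rightarrow> real"
  assumes n: "n = p + 2"
  shows "real n * (real n - 1) * (\<Sum>s\<le>p. real (p choose s) * (lam (s+1) / real (n choose (s+1))))
     = (\<Sum>i=0..n. real i * (real n - real i) * lam i)"
proof -
  have "(\<Sum>i=0..n. real i * (real n - real i) * lam i) = (\<Sum>i\<le>Suc (Suc p). real i * (real n - real i) * lam i)"
    using n by (simp add: atLeast0AtMost)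
  also have "\<dots> = (\<Sum>i\<le>Suc p. real (Suc i) * (real n - real (Suc i)) * lam (Suc i))"
    by (subst sum.atMost_Suc_shift) simp
  also have "\<dots> = (\<Sum>s\<le>p. real (s+1) * (real n - real (s+1)) * lam (s+1))"
    using n by (simp add: sum.atMost_Suc)
  also have "\<dots> = (\<Sum>s\<le>p. real n * (real n - 1) * (real (p choose s) * (lam (s+1) / real (n choose (s+1)))))"
    by (intro sum.cong refl C_term[OF n, symmetric]) simp
  finally show ?thesis by (simp add: sum_distrib_left)
qed

lemma B_formula:
  fixes lam :: "nat \<Rightarrow> real"
  assumes n: "n = p + 2"
  shows "real n * (real n - 1) * (\<Sum>s\<le>p. real (p choose s) * (lam (s+2) / real (n choose (s+2))))
     = (\<Sum>i=0..n. real i * (real i - 1) * lam i)"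
proof -
  have "(\<Sum>i=0..n. real i * (real i - 1) * lam i) = (\<Sum>i\<le>Suc (Suc p). real i * (real i - 1) * lam i)"
    using n by (simp add: atLeast0AtMost)
  also have "\<dots> = (\<Sum>i\<le>Suc p. real (Suc i) * (real (Suc i) - 1) * lam (Suc i))"
    by (subst sum.atMost_Suc_shift) simp
  also have "\<dots> = (\<Sum>i\<le>p. real (Suc (Suc i)) * (real (Suc (Suc i)) - 1) * lam (Suc (Suc i)))"
    by (subst sum.atMost_Suc_shift) simp
  also have "\<dots> = (\<Sum>s\<le>p. real (s+2) * (real (s+2) - 1) * lam (s+2))"
    by (intro sum.cong refl) (simp add: numeral_2_eq_2)
  also have "\<dots> = (\<Sum>s\<le>p. real n * (real n - 1) * (real (p choose s) * (lam (s+2) / real (n choose (s+2)))))"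
    by (intro sum.cong refl B_term[OF n, symmetric]) simp
  finally show ?thesis by (simp add: sum_distrib_left)
qed

lemma H_formula:
  fixes lam :: "nat \<Rightarrow> real"
  shows "(\<Sum>i=0..n. \<Sum>j=0..n. (real n - real i) * real j * lam i * lam j *
               ((real n - real i - 1) * (real j - 1) - real i * (real n - real j)))
    = (\<Sum>i=0..n. (real n - real i) * (real n - real i - 1) * lam i) * (\<Sum>i=0..n. real i * (real i - 1) * lam i)
      - (\<Sum>i=0..n. real i * (real n - real i) * lam i)\<^sup>2"
  unfolding power2_eq_square sum_product sum_subtractf[symmetric]
  by (intro sum.cong refl) (simp add: algebra_simps)


lemma dicke_marg2:
  assumes ij: "i \<in> qubits n" "j \<in> qubits n" "i \<noteq> j"
    and xy: "x \<subseteq> {i,j}" "y \<subseteq> {i,j}" "card x = card y"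
  shows "ptrace n {i,j} (dicke_mix n lam) x y = complex_of_real
     (\<Sum>s\<le>n - 2. real (n - 2 choose s) * (lam (s + card x) / real (n choose (s + card x))))"
proof -
  let ?T = "qubits n - {i,j}"
  have finT: "finite ?T" by simp
  have cT: "card ?T = n - 2" using ij by (simp add: card_Diff_subset)
  have "ptrace n {i,j} (dicke_mix n lam) x y = (\<Sum>c\<in>Pow ?T. dicke_mix n lam (x \<union> c) (y \<union> c))"
    using xy by (simp add: ptrace_def)
  also have "\<dots> = (\<Sum>c\<in>Pow ?T. complex_of_real (lam (card c + card x) / real (n choose (card c + card x))))"
  proof (intro sum.cong refl)
    fix c assume c: "c \<in> Pow ?T"
    have finc: "finite c" using c finite_subset[of c "qubits n"] by auto
    have finx: "finite x" "finite y" using xy finite_subset by auto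
    have sub: "x \<union> c \<subseteq> qubits n" "y \<union> c \<subseteq> qubits n" using c xy ij by auto
    have "card (x \<union> c) = card x + card c" by (rule card_Un_disjoint) (use finc finx c xy in auto)
    moreover have "card (y \<union> c) = card y + card c" by (rule card_Un_disjoint) (use finc finx c xy in auto)
    ultimately show "dicke_mix n lam (x \<union> c) (y \<union> c) = complex_of_real (lam (card c + card x) / real (n choose (card c + card x)))"
      using dicke_mix_entry[OF sub] xy(3) by (simp add: add.commute)
  qed
  also have "\<dots> = complex_of_real (\<Sum>c\<in>Pow ?T. (\<lambda>s. lam (s + card x) / real (n choose (s + card x))) (card c))"
    by (simp add: of_real_sum)
  also have "(\<Sum>c\<in>Pow ?T. (\<lambda>s. lam (s + card x) / real (n choose (s + card x))) (card c))
      = (\<Sum>s\<le>card ?T. real (card ?T choose s) * (lam (s + card x) / real (n choose (s + card x))))"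
    by (rule sum_card_pow[OF finT])
  finally show ?thesis unfolding cT .
qed

lemma ptrace_mix:
  assumes "x \<subseteq> D" "y \<subseteq> D"
  shows "ptrace n D (\<lambda>a b. \<Sum>k<m. complex_of_real (p k) * proj (\<psi> k) a b) x y
     = (\<Sum>k<m. complex_of_real (p k) * (\<Sum>c\<in>Pow (qubits n - D). \<psi> k (x \<union> c) * cnj (\<psi> k (y \<union> c))))"
  using assms by (simp add: ptrace_def proj_def sum_distrib_left sum.swap[of _ "{..<m}"])

lemma sing_term:
  fixes a b :: complex
  shows "a * cnj a + b * cnj b - a * cnj b - b * cnj a = complex_of_real ((cmod (a - b))\<^sup>2)"
proof -
  have "a * cnj a + b * cnj b - a * cnj b - b * cnj a = (a - b) * cnj (a - b)" by (simp add: algebra_simps)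
  then show ?thesis by (simp only: mult_cnj_sq)
qed


lemma dicke_detects:
  assumes n2: "n \<ge> 2" and lam0: "\<forall>i\<in>{0..n}. 0 \<le> lam i"
    and hyp: "(\<Sum>i=0..n. \<Sum>j=0..n. (real n - real i) * real j * lam i * lam j *
               ((real n - real i - 1) * (real j - 1) - real i * (real n - real j))) < 0"
  shows "detects_GME n {S. S \<subseteq> qubits n \<and> card S = 2} (dicke_mix n lam)"
  unfolding detects_GME_def genuinely_entangled_def
proof (intro ballI notI)
  fix \<sigma> assume \<sigma>c: "\<sigma> \<in> compat n (dicke_mix n lam) {S. S \<subseteq> qubits n \<and> card S = 2}"
  assume "biseparable n \<sigma>"
  then obtain m :: nat and p \<psi> where pk: "\<forall>i<m. 0 \<le> p i \<and> bisep_pure n (\<psi> i)" and p1: "(\<Sum>i<m. p i) = 1"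
    and \<sigma>e: "\<sigma> = (\<lambda>a b. \<Sum>i<m. complex_of_real (p i) * proj (\<psi> i) a b)"
    unfolding biseparable_def by blast
  obtain p' where n: "n = p' + 2" using n2 by (metis add.commute le_add_diff_inverse)
  have np: "n - 2 = p'" using n by simp
  let ?\<rho> = "dicke_mix n lam"
  have mar: "ptrace n {i,j} \<sigma> = ptrace n {i,j} ?\<rho>" if ij: "i \<in> qubits n" "j \<in> qubits n" "i \<noteq> j" for i j
  proof -
    have "{i,j} \<in> {S. S \<subseteq> qubits n \<and> card S = 2}" using ij by auto
    then show ?thesis using \<sigma>c unfolding compat_def by blast
  qed
  define A\<rho> where "A\<rho> = (\<Sum>s\<le>p'. real (p' choose s) * (lam s / real (n choose s)))"
  define C\<rho> where "C\<rho> = (\<Sum>s\<le>p'. real (p' choose s) * (lam (s+1) / real (n choose (s+1))))"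
  define B\<rho> where "B\<rho> = (\<Sum>s\<le>p'. real (p' choose s) * (lam (s+2) / real (n choose (s+2))))"
  have \<rho>A: "ptrace n {i,j} ?\<rho> {} {} = complex_of_real A\<rho>" 
    and \<rho>C1: "ptrace n {i,j} ?\<rho> {i} {i} = complex_of_real C\<rho>"
    and \<rho>C2: "ptrace n {i,j} ?\<rho> {j} {j} = complex_of_real C\<rho>"
    and \<rho>C3: "ptrace n {i,j} ?\<rho> {i} {j} = complex_of_real C\<rho>"
    and \<rho>C4: "ptrace n {i,j} ?\<rho> {j} {i} = complex_of_real C\<rho>"
    and \<rho>B: "ptrace n {i,j} ?\<rho> {i,j} {i,j} = complex_of_real B\<rho>"
    if ij: "i \<in> qubits n" "j \<in> qubits n" "i \<noteq> j" for i j
  proof -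
    show "ptrace n {i,j} ?\<rho> {} {} = complex_of_real A\<rho>"
      using dicke_marg2[OF ij, of "{}" "{}" lam] by (simp add: A\<rho>_def np)
    show "ptrace n {i,j} ?\<rho> {i} {i} = complex_of_real C\<rho>"
      using dicke_marg2[OF ij, of "{i}" "{i}" lam] by (simp add: C\<rho>_def np)
    show "ptrace n {i,j} ?\<rho> {j} {j} = complex_of_real C\<rho>"
      using dicke_marg2[OF ij, of "{j}" "{j}" lam] by (simp add: C\<rho>_def np)
    show "ptrace n {i,j} ?\<rho> {i} {j} = complex_of_real C\<rho>"
      using dicke_marg2[OF ij, of "{i}" "{j}" lam] by (simp add: C\<rho>_def np)
    show "ptrace n {i,j} ?\<rho> {j} {i} = complex_of_real C\<rho>"
      using dicke_marg2[OF ij, of "{j}" "{i}" lam] by (simp add: C\<rho>_def np)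
    show "ptrace n {i,j} ?\<rho> {i,j} {i,j} = complex_of_real B\<rho>"
      using dicke_marg2[OF ij, of "{i,j}" "{i,j}" lam] ij by (simp add: B\<rho>_def np)
  qed
  have \<sigma>v: "ptrace n D \<sigma> x y = (\<Sum>k<m. complex_of_real (p k) * (\<Sum>c\<in>Pow (qubits n - D). \<psi> k (x \<union> c) * cnj (\<psi> k (y \<union> c))))"
    if "x \<subseteq> D" "y \<subseteq> D" for D x y
    unfolding \<sigma>e by (rule ptrace_mix[OF that])
  text \<open>singlet weight vanishes\<close>
  have sw: "\<psi> k (insert i c) = \<psi> k (insert j c)"
    if k: "k < m" "p k > 0" and ij: "i \<in> qubits n" "j \<in> qubits n" "i \<noteq> j" and c: "c \<subseteq> qubits n - {i,j}" for k i j c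
  proof -
    let ?T = "qubits n - {i,j}"
    define E where "E = (\<lambda>k. \<Sum>c\<in>Pow ?T. (cmod (\<psi> k ({i} \<union> c) - \<psi> k ({j} \<union> c)))\<^sup>2)"
    have "ptrace n {i,j} \<sigma> {i} {i} + ptrace n {i,j} \<sigma> {j} {j} - ptrace n {i,j} \<sigma> {i} {j} - ptrace n {i,j} \<sigma> {j} {i}
       = (\<Sum>k<m. complex_of_real (p k) * (\<Sum>c\<in>Pow ?T.
            \<psi> k ({i} \<union> c) * cnj (\<psi> k ({i} \<union> c)) + \<psi> k ({j} \<union> c) * cnj (\<psi> k ({j} \<union> c))
            - \<psi> k ({i} \<union> c) * cnj (\<psi> k ({j} \<union> c)) - \<psi> k ({j} \<union> c) * cnj (\<psi> k ({i} \<union> c))))"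
      by (simp add: \<sigma>v sum.distrib sum_subtractf distrib_left right_diff_distrib)
    also have "\<dots> = complex_of_real (\<Sum>k<m. p k * E k)"
      unfolding sing_term by (simp add: E_def of_real_sum)
    finally have e1: "complex_of_real (\<Sum>k<m. p k * E k) = ptrace n {i,j} \<sigma> {i} {i} + ptrace n {i,j} \<sigma> {j} {j} - ptrace n {i,j} \<sigma> {i} {j} - ptrace n {i,j} \<sigma> {j} {i}" by simp
    also have "\<dots> = 0" unfolding mar[OF ij] \<rho>C1[OF ij] \<rho>C2[OF ij] \<rho>C3[OF ij] \<rho>C4[OF ij] by simp
    finally have "complex_of_real (\<Sum>k<m. p k * E k) = 0" .
    then have s0: "(\<Sum>k<m. p k * E k) = 0" by (simp only: of_real_eq_0_iff)
    have nn: "\<forall>k\<in>{..<m}. 0 \<le> p k * E k" using pk by (auto simp: E_def intro!: mult_nonneg_nonneg sum_nonneg)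
    have all0: "\<forall>x\<in>{..<m}. p x * E x = 0"
      using s0 nn sum_nonneg_eq_0_iff[of "{..<m}" "\<lambda>k. p k * E k"] by simp
    have "k \<in> {..<m}" using k by simp
    then have "p k * E k = 0" using all0 by blast
    then have E0: "E k = 0" using k by simp
    have "(cmod (\<psi> k ({i} \<union> c) - \<psi> k ({j} \<union> c)))\<^sup>2 = 0"
      using E0 sum_nonneg_eq_0_iff[of "Pow ?T" "\<lambda>c. (cmod (\<psi> k ({i} \<union> c) - \<psi> k ({j} \<union> c)))\<^sup>2"] c
      unfolding E_def by auto
    then show ?thesis by simp
  qed
  have sy: "symm n (\<psi> k)" if "k < m" "p k > 0" for k
    by (rule sym_from_swaps) (rule sw[OF that], auto)
  have 12: "(1::nat) \<in> qubits n" "(2::nat) \<in> qubits n" "(1::nat) \<noteq> 2" using n2 by (auto simp: qubits_def)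
  let ?D0 = "qubits n - {1,2}"
  define Ak where "Ak = (\<lambda>k. \<Sum>c\<in>Pow ?D0. (cmod (\<psi> k ({} \<union> c)))\<^sup>2)"
  define Ck where "Ck = (\<lambda>k. \<Sum>c\<in>Pow ?D0. (cmod (\<psi> k ({1} \<union> c)))\<^sup>2)"
  define Bk where "Bk = (\<lambda>k. \<Sum>c\<in>Pow ?D0. (cmod (\<psi> k ({1,2} \<union> c)))\<^sup>2)"
  have diag: "ptrace n {1,2} \<sigma> X X = complex_of_real (\<Sum>k<m. p k * (\<Sum>c\<in>Pow ?D0. (cmod (\<psi> k (X \<union> c)))\<^sup>2))"
    if "X \<subseteq> {1,2}" for X
    unfolding \<sigma>v[OF that that] by (simp add: mult_cnj_sq of_real_sum)
  have eA: "A\<rho> = (\<Sum>k<m. p k * Ak k)"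
  proof -
    have "complex_of_real A\<rho> = ptrace n {1,2} ?\<rho> {} {}" using \<rho>A[OF 12] by simp
    also have "\<dots> = ptrace n {1,2} \<sigma> {} {}" using mar[OF 12] by simp
    also have "\<dots> = complex_of_real (\<Sum>k<m. p k * (\<Sum>c\<in>Pow ?D0. (cmod (\<psi> k ({} \<union> c)))\<^sup>2))"
      by (rule diag) simp
    finally show ?thesis unfolding Ak_def of_real_eq_iff .
  qed
  have eC: "C\<rho> = (\<Sum>k<m. p k * Ck k)"
  proof -
    have "complex_of_real C\<rho> = ptrace n {1,2} ?\<rho> {1} {1}" using \<rho>C1[OF 12] by simp
    also have "\<dots> = ptrace n {1,2} \<sigma> {1} {1}" using mar[OF 12] by simp
    also have "\<dots> = complex_of_real (\<Sum>k<m. p k * (\<Sum>c\<in>Pow ?D0. (cmod (\<psi> k ({1} \<union> c)))\<^sup>2))"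
      by (rule diag) simp
    finally show ?thesis unfolding Ck_def of_real_eq_iff .
  qed
  have eB: "B\<rho> = (\<Sum>k<m. p k * Bk k)"
  proof -
    have "complex_of_real B\<rho> = ptrace n {1,2} ?\<rho> {1,2} {1,2}" using \<rho>B[OF 12] by simp
    also have "\<dots> = ptrace n {1,2} \<sigma> {1,2} {1,2}" using mar[OF 12] by simp
    also have "\<dots> = complex_of_real (\<Sum>k<m. p k * (\<Sum>c\<in>Pow ?D0. (cmod (\<psi> k ({1,2} \<union> c)))\<^sup>2))"
      by (rule diag) simp
    finally show ?thesis unfolding Bk_def of_real_eq_iff .
  qed
  have bound: "C\<rho> \<le> (t * A\<rho> + B\<rho> / t) / 2" if t: "t > 0" for t
  proof -
    have each: "p k * Ck k \<le> p k * ((t * Ak k + Bk k / t) / 2)" if k: "k < m" for k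
    proof (cases "p k = 0")
      case True then show ?thesis by simp
    next
      case False
      then have pp: "p k > 0" using pk k by (auto simp: less_le)
      note syk = sy[OF k pp]
      have "bisep_pure n (\<psi> k)" using pk k by blast
      then have "\<exists>S \<alpha> \<beta>. S \<noteq> {} \<and> S \<subset> qubits n \<and>
        (\<forall>a. a \<subseteq> qubits n \<longrightarrow> \<psi> k a = \<alpha> (a \<inter> S) * \<beta> (a - S))"
        unfolding bisep_pure_def by (elim conjE)
      then obtain S \<alpha> \<beta> where S: "S \<noteq> {}" "S \<subset> qubits n"
        and prod0: "\<forall>a. a \<subseteq> qubits n \<longrightarrow> \<psi> k a = \<alpha> (a \<inter> S) * \<beta> (a - S)"
        by (elim exE conjE) (rule that)
      have prod: "\<And>a. a \<subseteq> qubits n \<Longrightarrow> \<psi> k a = \<alpha> (a \<inter> S) * \<beta> (a - S)"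
        using prod0 by blast
      obtain i where i: "i \<in> S" using S by blast
      obtain j where j: "j \<in> qubits n - S" using S by blast
      have ij: "i \<in> qubits n" "j \<in> qubits n" "i \<noteq> j" using i j S by auto
      have cb: "(\<Sum>c\<in>Pow (qubits n - {i,j}). (cmod (\<psi> k ({i} \<union> c)))\<^sup>2)
         \<le> (t * (\<Sum>c\<in>Pow (qubits n - {i,j}). (cmod (\<psi> k ({} \<union> c)))\<^sup>2)
            + (\<Sum>c\<in>Pow (qubits n - {i,j}). (cmod (\<psi> k ({i,j} \<union> c)))\<^sup>2) / t) / 2"
        by (rule cut_bound[OF syk _ prod i j t]) (use S in auto)
      have Dsub: "{i,j} \<subseteq> qubits n" "{1,2} \<subseteq> qubits n" "card {i,j} = card {1::nat,2}" using ij 12 by auto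
      have t1: "(\<Sum>c\<in>Pow (qubits n - {i,j}). (cmod (\<psi> k ({i} \<union> c)))\<^sup>2) = Ck k"
        unfolding Ck_def by (rule transfer[OF syk Dsub]) auto
      have t2: "(\<Sum>c\<in>Pow (qubits n - {i,j}). (cmod (\<psi> k ({} \<union> c)))\<^sup>2) = Ak k"
        unfolding Ak_def by (rule transfer[OF syk Dsub]) auto
      have t3: "(\<Sum>c\<in>Pow (qubits n - {i,j}). (cmod (\<psi> k ({i,j} \<union> c)))\<^sup>2) = Bk k"
        unfolding Bk_def by (rule transfer[OF syk Dsub]) (use ij 12 in auto)
      have "Ck k \<le> (t * Ak k + Bk k / t) / 2" using cb unfolding t1 t2 t3 .
      then show ?thesis using pp by (intro mult_left_mono) auto
    qed
    have "C\<rho> \<le> (\<Sum>k<m. p k * ((t * Ak k + Bk k / t) / 2))"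
      unfolding eC by (rule sum_mono) (rule each, simp)
    also have "\<dots> = (\<Sum>k<m. (t * (p k * Ak k) + (p k * Bk k) / t) / 2)"
      by (intro sum.cong refl) (simp add: algebra_simps)
    also have "\<dots> = (t * (\<Sum>k<m. p k * Ak k) + (\<Sum>k<m. p k * Bk k) / t) / 2"
      by (rule sum_half)
    also have "\<dots> = (t * A\<rho> + B\<rho> / t) / 2" unfolding eA eB ..
    finally show ?thesis .
  qed
  have lamn: "0 \<le> lam i" if "i \<le> n" for i using lam0 that by auto
  have A0: "0 \<le> A\<rho>" unfolding A\<rho>_def using n by (intro sum_nonneg mult_nonneg_nonneg divide_nonneg_nonneg lamn) auto
  have B0: "0 \<le> B\<rho>" unfolding B\<rho>_def using n by (intro sum_nonneg mult_nonneg_nonneg divide_nonneg_nonneg lamn) auto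
  have C0: "0 \<le> C\<rho>" unfolding C\<rho>_def using n by (intro sum_nonneg mult_nonneg_nonneg divide_nonneg_nonneg lamn) auto
  define N where "N = real n * (real n - 1)"
  have Np: "N > 0" using n2 by (simp add: N_def)
  have fA: "N * A\<rho> = (\<Sum>i=0..n. (real n - real i) * (real n - real i - 1) * lam i)"
    unfolding N_def A\<rho>_def by (rule A_formula[OF n])
  have fB: "N * B\<rho> = (\<Sum>i=0..n. real i * (real i - 1) * lam i)"
    unfolding N_def B\<rho>_def by (rule B_formula[OF n])
  have fC: "N * C\<rho> = (\<Sum>i=0..n. real i * (real n - real i) * lam i)"
    unfolding N_def C\<rho>_def by (rule C_formula[OF n])
  have "(N * A\<rho>) * (N * B\<rho>) - (N * C\<rho>)\<^sup>2 < 0"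
    using hyp unfolding H_formula fA fB fC .
  then have "N\<^sup>2 * (A\<rho> * B\<rho> - C\<rho>\<^sup>2) < 0" by (simp add: algebra_simps power2_eq_square)
  then have "A\<rho> * B\<rho> < C\<rho>\<^sup>2" using Np by (simp add: mult_less_0_iff)
  then show False using quad_contra[OF A0 B0 C0 _ bound] by blast
qed


lemma L_le_n:
  assumes "density (qubits n) \<rho>"
  shows "L_num n \<rho> \<le> n"
  unfolding L_num_def
  by (rule Least_le) (rule exI[of _ "{qubits n}"], use determines_full[OF assms] in auto)

lemma detects_full:
  assumes "density (qubits n) \<rho>" "genuinely_entangled n \<rho>"
  shows "detects_GME n {qubits n} \<rho>"
  using determines_full[OF assms(1)] assms(2) unfolding determines_def detects_GME_def by auto

lemma l_ge_2:
  assumes dens: "density (qubits n) \<rho>" and n2: "n \<ge> 2"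
    and ex: "\<exists>k \<S>. \<S> \<subseteq> Pow (qubits n) \<and> detects_GME n \<S> \<rho> \<and> (\<forall>S\<in>\<S>. card S \<le> k)"
  shows "2 \<le> l_num n \<rho>"
proof (rule ccontr)
  assume "\<not> 2 \<le> l_num n \<rho>"
  then have lt: "l_num n \<rho> \<le> 1" by simp
  have "\<exists>\<S>. \<S> \<subseteq> Pow (qubits n) \<and> detects_GME n \<S> \<rho> \<and> (\<forall>S\<in>\<S>. card S \<le> l_num n \<rho>)"
    unfolding l_num_def by (rule LeastI_ex) (use ex in blast)
  then obtain \<S> where S: "\<S> \<subseteq> Pow (qubits n)" "detects_GME n \<S> \<rho>" "\<forall>S\<in>\<S>. card S \<le> l_num n \<rho>" by blast
  have "\<forall>S\<in>\<S>. card S \<le> 1" using S(3) lt by fastforce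
  then obtain \<sigma> where "\<sigma> \<in> compat n \<rho> \<S>" "biseparable n \<sigma>"
    using low_marginals_bisep[OF dens n2 S(1)] by blast
  then show False using S(2) unfolding detects_GME_def genuinely_entangled_def by blast
qed

theorem proposition7:
  fixes n :: nat
  assumes "n \<ge> 2"
  shows "(\<forall>\<rho>. density (qubits n) \<rho> \<and> genuinely_entangled n \<rho> \<longrightarrow>
            int (L_num n \<rho>) - int (l_num n \<rho>) \<le> max 0 (int n - 2))
       \<and> (\<forall>lam :: nat \<Rightarrow> real.
            (\<forall>i\<in>{0..n}. 0 \<le> lam i) \<and> (\<Sum>i=0..n. lam i) = 1 \<and> lam 0 * lam n \<noteq> 0 \<and>
            (\<Sum>i=0..n. \<Sum>j=0..n. (real n - real i) * real j * lam i * lam j *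
               ((real n - real i - 1) * (real j - 1) - real i * (real n - real j))) < 0
            \<longrightarrow> genuinely_entangled n (dicke_mix n lam) \<and>
                L_num n (dicke_mix n lam) = n \<and> l_num n (dicke_mix n lam) = 2 \<and>
                int (L_num n (dicke_mix n lam)) - int (l_num n (dicke_mix n lam)) = int n - 2)"
proof (intro conjI allI impI)
  fix \<rho> assume a: "density (qubits n) \<rho> \<and> genuinely_entangled n \<rho>"
  have L: "L_num n \<rho> \<le> n" using L_le_n a by blast
  have l: "2 \<le> l_num n \<rho>"
    by (rule l_ge_2) (use a assms detects_full in \<open>blast+\<close>)
  show "int (L_num n \<rho>) - int (l_num n \<rho>) \<le> max 0 (int n - 2)" using L l by linarith
next
  fix lam :: "nat \<Rightarrow> real"
  assume h: "(\<forall>i\<in>{0..n}. 0 \<le> lam i) \<and> (\<Sum>i=0..n. lam i) = 1 \<and> lam 0 * lam n \<noteq> 0 \<and>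
            (\<Sum>i=0..n. \<Sum>j=0..n. (real n - real i) * real j * lam i * lam j *
               ((real n - real i - 1) * (real j - 1) - real i * (real n - real j))) < 0"
  let ?\<rho> = "dicke_mix n lam"
  let ?S2 = "{S. S \<subseteq> qubits n \<and> card S = 2}"
  have dens: "density (qubits n) ?\<rho>" using dicke_mix_density h by blast
  have det: "detects_GME n ?S2 ?\<rho>" using dicke_detects assms h by blast
  have "?\<rho> \<in> compat n ?\<rho> ?S2" using dens unfolding compat_def by blast
  then show gme: "genuinely_entangled n ?\<rho>" using det unfolding detects_GME_def by blast
  have ex2: "\<exists>k \<S>. \<S> \<subseteq> Pow (qubits n) \<and> detects_GME n \<S> ?\<rho> \<and> (\<forall>S\<in>\<S>. card S \<le> k)"
    using det by (intro exI[of _ 2] exI[of _ ?S2]) auto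
  have l2: "l_num n ?\<rho> \<le> 2"
    unfolding l_num_def by (rule Least_le) (rule exI[of _ ?S2], use det in auto)
  have l: "l_num n ?\<rho> = 2" using l2 l_ge_2[OF dens assms ex2] by simp
  have Ln: "L_num n ?\<rho> \<le> n" by (rule L_le_n[OF dens])
  have "n \<le> L_num n ?\<rho>"
  proof (rule ccontr)
    assume "\<not> n \<le> L_num n ?\<rho>"
    then have lt: "L_num n ?\<rho> < n" by simp
    have "\<exists>\<S>. \<S> \<subseteq> Pow (qubits n) \<and> determines n \<S> ?\<rho> \<and> (\<forall>S\<in>\<S>. card S \<le> L_num n ?\<rho>)"
      unfolding L_num_def by (rule LeastI_ex) (rule exI[of _ n], rule exI[of _ "{qubits n}"], use determines_full[OF dens] in auto)
    then obtain \<S> where S: "\<S> \<subseteq> Pow (qubits n)" "determines n \<S> ?\<rho>" "\<forall>S\<in>\<S>. card S \<le> L_num n ?\<rho>" by blast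
    have "\<not> determines n \<S> ?\<rho>"
      by (rule not_determines[OF _ _ _ _ S(1) S(3) lt]) (use h assms in auto)
    then show False using S(2) by simp
  qed
  then show L: "L_num n ?\<rho> = n" using Ln by simp
  show "l_num n ?\<rho> = 2" by (rule l)
  show "int (L_num n ?\<rho>) - int (l_num n ?\<rho>) = int n - 2" using L l by simp
qed


end
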